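(* Let $\Gamma_1$ be a represented pointclass satisfying the standing assumptions, containing the closed sets and (uniformly computably) closed under finite unions and under the operation $(A_n)_{n\in\mathbb{N}}\mapsto\{0^\mathbb{N}\}\cup\bigcup_{n\in\mathbb{N}}0^n1A_n$. Let $\Gamma=\Gamma_1\cup\overline{\Gamma_1}$ (the closure under complements), also satisfying the standing assumptions. Then $\widehat{\mathrm{Win}_{\Gamma_1}}\leq_W\mathrm{SPE}_\Gamma$.
   Context: $f\leq_W g$ iff there are computable partial $K,H$ on $\mathbb{N}^\mathbb{N}$ such that for every realizer $G$ of $g$, $p\mapsto K(\langle p,G(H(p))\rangle)$ realizes $f$. $\widehat{f}(x_0,x_1,\ldots)=(f(x_0),f(x_1),\ldots)$. $\overline{\Delta}=\{U^C\mid U\in\Delta\}$; $wA=\{wp\mid p\in A\}$. Games: infinite sequential games with choices $\{0,1\}$, players, turn function $d:\{0,1\}^*\to A$, outcomes $O$, valuation $v$, preferences with well-founded inverses; strategy profiles $s:\{0,1\}^*\to\{0,1\}$; play induced from history $\lambda$: $p_n=\lambda_n$ for $n<|\lambda|$, else $p_n=s(p_{<n})$. Nash equilibrium: no player can unilaterally switch strategy to get a strictly preferred outcome; subgame perfect: Nash equilibrium of the game started at every history. Named by numbers of players/outcomes, $d$ and preferences as tables, and for each player $a$ and upper set $U$ w.r.t. $\prec_a$ a $\Gamma$-name of $v^{-1}(U)$. Win/lose games: two players, outcomes $w_1,w_2$, player $i$ prefers $w_i$. $\mathrm{Win}_\Delta$: input a win/lose game with player-1 winning set given by a $\Delta$-name;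 output which player has a winning strategy. $\mathrm{SPE}_\Gamma$: input a two-player game with finitely many outcomes and antagonistic linear preferences; output a subgame perfect equilibrium. Standing assumptions on a pointclass: its win/lose games are determined; contains $\emptyset,\{0,1\}^\mathbb{N}$; uniformly computable closure under rescaling and its inverse and intersection with clopens. *)

theory Defs
  imports Main "HOL-Library.Nat_Bijection"
begin

section \<open>Baire space, Cantor space, tupling\<close>

type_synonym baire = "nat \<Rightarrow> nat"
type_synonym cantor = "nat \<Rightarrow> bool"   (* {0,1}^N, with 0 = False, 1 = True *)

definition pairB :: "baire \<Rightarrow> baire \<Rightarrow> baire" where
  "pairB p q = (\<lambda>n. if even n then p (n div 2) else q (n div 2))"

definition compB :: "nat \<Rightarrow> baire \<Rightarrow> baire" where
  "compB i p = (\<lambda>n. p (prod_encode (i, n)))"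

definition wcode :: "bool list \<Rightarrow> nat" where
  "wcode w = list_encode (map (\<lambda>b. if b then 1 else 0) w)"

definition prepend :: "bool list \<Rightarrow> cantor \<Rightarrow> cantor" where
  "prepend w x = (\<lambda>n. if n < length w then w ! n else x (n - length w))"

definition cyl :: "bool list \<Rightarrow> cantor set" where
  "cyl w = {x. \<forall>n < length w. x n = w ! n}"

definition zeros :: cantor where "zeros = (\<lambda>_. False)"

section \<open>Partial recursive functions and computable partial functions on Baire space\<close>

fun prec_aux :: "(nat \<Rightarrow> nat option) \<Rightarrow> (nat \<Rightarrow> nat option) \<Rightarrow> nat \<Rightarrow> nat \<Rightarrow> nat option" where
  "prec_aux f g x 0 = f x"
| "prec_aux f g x (Suc y) = Option.bind (prec_aux f g x y) (\<lambda>r. g (prod_encode (x, prod_encode (y, r))))"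

definition prec :: "(nat \<Rightarrow> nat option) \<Rightarrow> (nat \<Rightarrow> nat option) \<Rightarrow> nat \<Rightarrow> nat option" where
  "prec f g n = prec_aux f g (fst (prod_decode n)) (snd (prod_decode n))"

definition mu :: "(nat \<Rightarrow> nat option) \<Rightarrow> nat \<Rightarrow> nat option" where
  "mu f x = (if \<exists>y. f (prod_encode (x, y)) = Some 0 \<and> (\<forall>z<y. f (prod_encode (x, z)) \<noteq> None)
             then Some (LEAST y. f (prod_encode (x, y)) = Some 0 \<and> (\<forall>z<y. f (prod_encode (x, z)) \<noteq> None))
             else None)"

inductive_set partrec :: "(nat \<Rightarrow> nat option) set" where
  zero: "(\<lambda>_. Some 0) \<in> partrec"
| suc: "(\<lambda>n. Some (Suc n)) \<in> partrec"
| ident: "(\<lambda>n. Some n) \<in> partrec"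
| pfst: "(\<lambda>n. Some (fst (prod_decode n))) \<in> partrec"
| psnd: "(\<lambda>n. Some (snd (prod_decode n))) \<in> partrec"
| comp: "f \<in> partrec \<Longrightarrow> g \<in> partrec \<Longrightarrow> (\<lambda>n. Option.bind (g n) f) \<in> partrec"
| pair: "f \<in> partrec \<Longrightarrow> g \<in> partrec \<Longrightarrow>
     (\<lambda>n. Option.bind (f n) (\<lambda>a. Option.bind (g n) (\<lambda>b. Some (prod_encode (a, b))))) \<in> partrec"
| prim_rec: "f \<in> partrec \<Longrightarrow> g \<in> partrec \<Longrightarrow> prec f g \<in> partrec"
| minim: "f \<in> partrec \<Longrightarrow> mu f \<in> partrec"

definition prefix_code :: "baire \<Rightarrow> nat \<Rightarrow> nat" where
  "prefix_code p m = list_encode (map p [0..<m])"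

text \<open>A partial function on Baire space is computable iff it is a restriction of the function
  computed by a Type-2 machine: a partial recursive psi, given a finite prefix of the input and an
  output position n, either diverges or yields the n-th output digit; on each point of the domain
  every position is produced by some prefix, and all produced values are consistent.\<close>
definition computableB :: "(baire \<Rightarrow> baire option) \<Rightarrow> bool" where
  "computableB F \<longleftrightarrow> (\<exists>\<psi>\<in>partrec. \<forall>p q. F p = Some q \<longrightarrow>
      (\<forall>n. (\<exists>m. \<psi> (prod_encode (prefix_code p m, n)) = Some (q n)) \<and>
           (\<forall>m v. \<psi> (prod_encode (prefix_code p m, n)) = Some v \<longrightarrow> v = q n)))"

section \<open>Represented spaces, realizers, Weihrauch reducibility, parallelization\<close>

text \<open>A (multi-)representation is a relation "p names x"; a multivalued function
  f :: 'a => 'b set has domain {x. f x \<noteq> {}}.\<close>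

definition realizes :: "('a \<Rightarrow> 'b set) \<Rightarrow> (baire \<Rightarrow> 'a \<Rightarrow> bool) \<Rightarrow> (baire \<Rightarrow> 'b \<Rightarrow> bool)
                        \<Rightarrow> (baire \<Rightarrow> baire option) \<Rightarrow> bool" where
  "realizes f \<delta>A \<delta>B F \<longleftrightarrow>
     (\<forall>p x. \<delta>A p x \<longrightarrow> f x \<noteq> {} \<longrightarrow> (\<exists>q y. F p = Some q \<and> \<delta>B q y \<and> y \<in> f x))"

definition weihrauch_leq ::
  "('a \<Rightarrow> 'b set) \<Rightarrow> (baire \<Rightarrow> 'a \<Rightarrow> bool) \<Rightarrow> (baire \<Rightarrow> 'b \<Rightarrow> bool) \<Rightarrow>
   ('c \<Rightarrow> 'd set) \<Rightarrow> (baire \<Rightarrow> 'c \<Rightarrow> bool) \<Rightarrow> (baire \<Rightarrow> 'd \<Rightarrow> bool) \<Rightarrow> bool" where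
  "weihrauch_leq f \<delta>A \<delta>B g \<delta>C \<delta>D \<longleftrightarrow>
     (\<exists>K H. computableB K \<and> computableB H \<and>
        (\<forall>G. realizes g \<delta>C \<delta>D G \<longrightarrow>
             realizes f \<delta>A \<delta>B (\<lambda>p. Option.bind (H p) (\<lambda>h. Option.bind (G h) (\<lambda>r. K (pairB p r))))))"

definition hat :: "('a \<Rightarrow> 'b set) \<Rightarrow> (nat \<Rightarrow> 'a) \<Rightarrow> (nat \<Rightarrow> 'b) set" where
  "hat f xs = {ys. \<forall>i. ys i \<in> f (xs i)}"

definition rep_seq :: "(baire \<Rightarrow> 'a \<Rightarrow> bool) \<Rightarrow> baire \<Rightarrow> (nat \<Rightarrow> 'a) \<Rightarrow> bool" where
  "rep_seq \<delta> p xs \<longleftrightarrow> (\<forall>i. \<delta> (compB i p) (xs i))"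

definition rep_nat :: "baire \<Rightarrow> nat \<Rightarrow> bool" where
  "rep_nat p n \<longleftrightarrow> p 0 = n"

section \<open>Games\<close>

fun play_pre :: "(bool list \<Rightarrow> bool) \<Rightarrow> bool list \<Rightarrow> nat \<Rightarrow> bool list" where
  "play_pre s h 0 = []"
| "play_pre s h (Suc n) = (let w = play_pre s h n in w @ [if n < length h then h ! n else s w])"

definition play :: "(bool list \<Rightarrow> bool) \<Rightarrow> bool list \<Rightarrow> cantor" where
  "play s h = (\<lambda>n. play_pre s h (Suc n) ! n)"

subsection \<open>Win/lose games (turn d w = True means player 1 moves at w)\<close>

definition p1_wins :: "(bool list \<Rightarrow> bool) \<Rightarrow> cantor set \<Rightarrow> bool" where
  "p1_wins d W \<longleftrightarrow> (\<exists>\<sigma>. \<forall>\<tau>. play (\<lambda>w. if d w then \<sigma> w else \<tau> w) [] \<in> W)"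

definition p2_wins :: "(bool list \<Rightarrow> bool) \<Rightarrow> cantor set \<Rightarrow> bool" where
  "p2_wins d W \<longleftrightarrow> (\<exists>\<tau>. \<forall>\<sigma>. play (\<lambda>w. if d w then \<sigma> w else \<tau> w) [] \<notin> W)"

definition determined :: "(bool list \<Rightarrow> bool) \<Rightarrow> cantor set \<Rightarrow> bool" where
  "determined d W \<longleftrightarrow> p1_wins d W \<or> p2_wins d W"

subsection \<open>General games: players {0..<players}, outcomes {0..<outcomes};
  gpref G a x y means x \<prec>_a y (player a strictly prefers y to x)\<close>

record game =
  players :: nat
  outcomes :: nat
  turn :: "bool list \<Rightarrow> nat"
  gpref :: "nat \<Rightarrow> nat \<Rightarrow> nat \<Rightarrow> bool"
  gval :: "cantor \<Rightarrow> nat"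

definition wf_game :: "game \<Rightarrow> bool" where
  "wf_game G \<longleftrightarrow>
     (\<forall>w. turn G w < players G) \<and> (\<forall>x. gval G x < outcomes G) \<and>
     (\<forall>a x y. gpref G a x y \<longrightarrow> a < players G \<and> x < outcomes G \<and> y < outcomes G) \<and>
     (\<forall>a. (\<forall>x. \<not> gpref G a x x) \<and> (\<forall>x y z. gpref G a x y \<longrightarrow> gpref G a y z \<longrightarrow> gpref G a x z)
          \<and> wfP (\<lambda>y x. gpref G a x y))"

definition upper_set :: "game \<Rightarrow> nat \<Rightarrow> nat set \<Rightarrow> bool" where
  "upper_set G a U \<longleftrightarrow> U \<subseteq> {0..<outcomes G} \<and> (\<forall>x y. x \<in> U \<longrightarrow> gpref G a x y \<longrightarrow> y \<in> U)"

definition nash_at :: "game \<Rightarrow> (bool list \<Rightarrow> bool) \<Rightarrow> bool list \<Rightarrow> bool" where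
  "nash_at G s h \<longleftrightarrow> (\<forall>a < players G. \<forall>s'. (\<forall>w. turn G w \<noteq> a \<longrightarrow> s' w = s w) \<longrightarrow>
       \<not> gpref G a (gval G (play s h)) (gval G (play s' h)))"

definition subgame_perfect :: "game \<Rightarrow> (bool list \<Rightarrow> bool) \<Rightarrow> bool" where
  "subgame_perfect G s \<longleftrightarrow> (\<forall>h. nash_at G s h)"

definition antagonistic_linear :: "game \<Rightarrow> bool" where
  "antagonistic_linear G \<longleftrightarrow> players G = 2 \<and>
     (\<forall>x < outcomes G. \<forall>y < outcomes G. x \<noteq> y \<longrightarrow> gpref G 0 x y \<or> gpref G 0 y x) \<and>
     (\<forall>x y. gpref G 1 x y \<longleftrightarrow> gpref G 0 y x)"

section \<open>Represented pointclasses\<close>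

text \<open>A represented pointclass is a partial surjection from Baire space onto a set of subsets of
  Cantor space; the pointclass itself is its range.\<close>
type_synonym pointclass = "baire \<Rightarrow> cantor set option"

definition pc_rel :: "pointclass \<Rightarrow> baire \<Rightarrow> cantor set \<Rightarrow> bool" where
  "pc_rel \<Gamma> p A \<longleftrightarrow> \<Gamma> p = Some A"

definition const_name :: "nat \<Rightarrow> baire" where "const_name k = (\<lambda>_. k)"

definition clopen_of :: "bool list list \<Rightarrow> cantor set" where
  "clopen_of ws = (\<Union>w \<in> set ws. cyl w)"

definition wlcode :: "bool list list \<Rightarrow> nat" where
  "wlcode ws = list_encode (map wcode ws)"

definition standing_assumptions :: "pointclass \<Rightarrow> bool" where
  "standing_assumptions \<Gamma> \<longleftrightarrow>
     (\<forall>d W. W \<in> ran \<Gamma> \<longrightarrow> determined d W) \<and>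
     {} \<in> ran \<Gamma> \<and> UNIV \<in> ran \<Gamma> \<and>
     (\<exists>F. computableB F \<and> (\<forall>w p A. \<Gamma> p = Some A \<longrightarrow>
        (\<exists>q. F (pairB (const_name (wcode w)) p) = Some q \<and> \<Gamma> q = Some (prepend w ` A)))) \<and>
     (\<exists>F. computableB F \<and> (\<forall>w p A. \<Gamma> p = Some A \<longrightarrow>
        (\<exists>q. F (pairB (const_name (wcode w)) p) = Some q \<and> \<Gamma> q = Some {x. prepend w x \<in> A}))) \<and>
     (\<exists>F. computableB F \<and> (\<forall>ws p A. \<Gamma> p = Some A \<longrightarrow>
        (\<exists>q. F (pairB (const_name (wlcode ws)) p) = Some q \<and> \<Gamma> q = Some (A \<inter> clopen_of ws))))"

text \<open>Closed subsets of Cantor space, named by (characteristic functions of) sets of words: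
  p names the set of all x all of whose finite prefixes w satisfy p (wcode w) = 0.\<close>
definition closed_rep :: "baire \<Rightarrow> cantor set \<Rightarrow> bool" where
  "closed_rep p A \<longleftrightarrow> A = {x. \<forall>n. p (wcode (map x [0..<n])) = 0}"

definition contains_closed_unif :: "pointclass \<Rightarrow> bool" where
  "contains_closed_unif \<Gamma> \<longleftrightarrow> (\<exists>F. computableB F \<and>
     (\<forall>p A. closed_rep p A \<longrightarrow> (\<exists>q. F p = Some q \<and> \<Gamma> q = Some A)))"

definition closed_fin_union_unif :: "pointclass \<Rightarrow> bool" where
  "closed_fin_union_unif \<Gamma> \<longleftrightarrow> (\<exists>F. computableB F \<and>
     (\<forall>p q A B. \<Gamma> p = Some A \<longrightarrow> \<Gamma> q = Some B \<longrightarrow>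
        (\<exists>r. F (pairB p q) = Some r \<and> \<Gamma> r = Some (A \<union> B))))"

definition omega_op :: "(nat \<Rightarrow> cantor set) \<Rightarrow> cantor set" where
  "omega_op As = {zeros} \<union> (\<Union>n. prepend (replicate n False @ [True]) ` As n)"

definition closed_omega_op_unif :: "pointclass \<Rightarrow> bool" where
  "closed_omega_op_unif \<Gamma> \<longleftrightarrow> (\<exists>F. computableB F \<and>
     (\<forall>p As. (\<forall>n. \<Gamma> (compB n p) = Some (As n)) \<longrightarrow>
        (\<exists>r. F p = Some r \<and> \<Gamma> r = Some (omega_op As))))"

text \<open>The closure under complements: a name is a bit followed by a name of the base pointclass;
  bit 0 names the set itself, any other value its complement.\<close>
definition compl_closure :: "pointclass \<Rightarrow> pointclass" where
  "compl_closure \<Gamma> p = (case \<Gamma> (\<lambda>n. p (Suc n)) of None \<Rightarrow> None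
                          | Some A \<Rightarrow> Some (if p 0 = 0 then A else - A))"

section \<open>The problems Win and SPE\<close>

text \<open>Win/lose games as pairs (turn function, player-1 winning set).  A name consists of a
  table of the turn function (value 1: player 1, value 2: player 2) and a name of the winning set.\<close>
definition winlose_rep :: "pointclass \<Rightarrow> baire \<Rightarrow> ((bool list \<Rightarrow> bool) \<times> cantor set) \<Rightarrow> bool" where
  "winlose_rep \<Delta> p G \<longleftrightarrow>
     (\<forall>w. compB 0 p (wcode w) \<in> {1, 2} \<and> (fst G w \<longleftrightarrow> compB 0 p (wcode w) = 1)) \<and>
     \<Delta> (compB 1 p) = Some (snd G)"

definition Win :: "((bool list \<Rightarrow> bool) \<times> cantor set) \<Rightarrow> nat set" where
  "Win G = {i. (i = 1 \<and> p1_wins (fst G) (snd G)) \<or> (i = 2 \<and> p2_wins (fst G) (snd G))}"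

text \<open>Names of games: numbers of players/outcomes, tables of turn function and preferences, and
  for each player a and upper set U a \<Gamma>-name of val^-1(U).\<close>
definition game_rep :: "pointclass \<Rightarrow> baire \<Rightarrow> game \<Rightarrow> bool" where
  "game_rep \<Gamma> p G \<longleftrightarrow> wf_game G \<and>
     players G = compB 0 p 0 \<and> outcomes G = compB 1 p 0 \<and>
     (\<forall>w. turn G w = compB 2 p (wcode w)) \<and>
     (\<forall>a x y. gpref G a x y \<longleftrightarrow> (a < players G \<and> x < outcomes G \<and> y < outcomes G \<and>
                compB 3 p (prod_encode (a, prod_encode (x, y))) \<noteq> 0)) \<and>
     (\<forall>a U. a < players G \<longrightarrow> upper_set G a U \<longrightarrow>
        \<Gamma> (compB (prod_encode (a, set_encode U)) (compB 4 p)) = Some (gval G -` U))"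

definition profile_rep :: "baire \<Rightarrow> (bool list \<Rightarrow> bool) \<Rightarrow> bool" where
  "profile_rep q s \<longleftrightarrow> (\<forall>w. q (wcode w) = (if s w then 1 else 0))"

definition SPE :: "game \<Rightarrow> (bool list \<Rightarrow> bool) set" where
  "SPE G = (if antagonistic_linear G then {s. subgame_perfect G s} else {})"

end

theory Submission
  imports Defs
begin


abbreviation pe where "pe a b \<equiv> prod_encode (a, b)"
abbreviation pf where "pf n \<equiv> fst (prod_decode n)"
abbreviation ps where "ps n \<equiv> snd (prod_decode n)"

named_theorems tot_intros
definition tot :: "(nat \<Rightarrow> nat) \<Rightarrow> bool" where "tot f \<longleftrightarrow> (\<lambda>n. Some (f n)) \<in> partrec"

lemma tot_const[tot_intros]: "tot (\<lambda>_. k)"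
  unfolding tot_def
proof (induction k)
  case 0 show ?case by (rule partrec.zero)
next
  case (Suc k)
  have "(\<lambda>n. Option.bind ((\<lambda>_. Some k) n) (\<lambda>n. Some (Suc n))) \<in> partrec"
    by (rule partrec.comp[OF partrec.suc Suc])
  thus ?case by simp
qed

lemma tot_comp: "tot f \<Longrightarrow> tot g \<Longrightarrow> tot (\<lambda>n. f (g n))"
  unfolding tot_def using partrec.comp[of "\<lambda>n. Some (f n)" "\<lambda>n. Some (g n)"] by simp

lemma tot_id[tot_intros]: "tot (\<lambda>n. n)" unfolding tot_def by (rule partrec.ident)

lemma tot_Suc[tot_intros]: "tot f \<Longrightarrow> tot (\<lambda>n. Suc (f n))"
  using tot_comp[of Suc f] partrec.suc unfolding tot_def by simp

lemma tot_pf[tot_intros]: "tot f \<Longrightarrow> tot (\<lambda>n. pf (f n))"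
  using tot_comp[of "\<lambda>n. pf n" f] partrec.pfst unfolding tot_def by simp

lemma tot_ps[tot_intros]: "tot f \<Longrightarrow> tot (\<lambda>n. ps (f n))"
  using tot_comp[of "\<lambda>n. ps n" f] partrec.psnd unfolding tot_def by simp

lemma tot_pe[tot_intros]: "tot f \<Longrightarrow> tot g \<Longrightarrow> tot (\<lambda>n. pe (f n) (g n))"
  unfolding tot_def using partrec.pair[of "\<lambda>n. Some (f n)" "\<lambda>n. Some (g n)"] by simp

definition tot2 :: "(nat \<Rightarrow> nat \<Rightarrow> nat) \<Rightarrow> bool" where
  "tot2 h \<longleftrightarrow> tot (\<lambda>n. h (pf n) (ps n))"

lemma tot2_app: "tot2 h \<Longrightarrow> tot f \<Longrightarrow> tot g \<Longrightarrow> tot (\<lambda>n. h (f n) (g n))"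
  unfolding tot2_def using tot_comp[of "\<lambda>n. h (pf n) (ps n)" "\<lambda>n. pe (f n) (g n)"] tot_pe by simp

fun nrec :: "(nat \<Rightarrow> nat) \<Rightarrow> (nat \<Rightarrow> nat \<Rightarrow> nat \<Rightarrow> nat) \<Rightarrow> nat \<Rightarrow> nat \<Rightarrow> nat" where
  "nrec f g x 0 = f x"
| "nrec f g x (Suc y) = g x y (nrec f g x y)"

lemma prec_aux_tot: "prec_aux (\<lambda>n. Some (f n)) (\<lambda>n. Some (g (pf n) (pf (ps n)) (ps (ps n)))) x y
   = Some (nrec f g x y)"
  by (induction y) auto

lemma tot_nrec: "tot f \<Longrightarrow> tot (\<lambda>n. g (pf n) (pf (ps n)) (ps (ps n))) \<Longrightarrow> tot2 (nrec f g)"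
proof -
  assume a: "tot f" "tot (\<lambda>n. g (pf n) (pf (ps n)) (ps (ps n)))"
  have "prec (\<lambda>n. Some (f n)) (\<lambda>n. Some (g (pf n) (pf (ps n)) (ps (ps n)))) = (\<lambda>n. Some (nrec f g (pf n) (ps n)))"
    by (rule ext) (simp add: prec_def prec_aux_tot)
  with partrec.prim_rec[of "\<lambda>n. Some (f n)" "\<lambda>n. Some (g (pf n) (pf (ps n)) (ps (ps n)))"] a
  show ?thesis unfolding tot2_def tot_def by simp
qed

lemma nrec_add: "nrec (\<lambda>x. x) (\<lambda>x y r. Suc r) a b = a + b" by (induction b) auto
lemma tot2_add: "tot2 (+)"
proof -
  have "tot2 (nrec (\<lambda>x. x) (\<lambda>x y r. Suc r))" by (rule tot_nrec) (intro tot_intros)+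
  thus ?thesis using nrec_add by (simp add: tot2_def)
qed
lemma tot_add[tot_intros]: "tot f \<Longrightarrow> tot g \<Longrightarrow> tot (\<lambda>n. f n + g n)"
  using tot2_app[OF tot2_add] .

lemma nrec_pred: "nrec (\<lambda>x. 0) (\<lambda>x y r. y) a b = b - 1" by (induction b) auto
lemma tot_pred[tot_intros]: "tot f \<Longrightarrow> tot (\<lambda>n. f n - 1)"
proof -
  assume f: "tot f"
  have "tot2 (nrec (\<lambda>x. 0) (\<lambda>x y r. y))" by (rule tot_nrec) (intro tot_intros)+
  from tot2_app[OF this tot_const f] show ?thesis unfolding nrec_pred .
qed

lemma nrec_sub: "nrec (\<lambda>x. x) (\<lambda>x y r. r - 1) a b = a - b" by (induction b) auto
lemma tot_sub[tot_intros]: "tot f \<Longrightarrow> tot g \<Longrightarrow> tot (\<lambda>n. f n - g n)"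
proof -
  assume f: "tot f" and g: "tot g"
  have "tot2 (nrec (\<lambda>x. x) (\<lambda>x y r. r - 1))" by (rule tot_nrec) (intro tot_intros)+
  from tot2_app[OF this f g] show ?thesis unfolding nrec_sub .
qed

lemma nrec_ifz: "nrec (\<lambda>x. pf x) (\<lambda>x y r. ps x) (pe a b) z = (if z = 0 then a else b)"
  by (cases z) auto
lemma tot_ifz: "tot c \<Longrightarrow> tot f \<Longrightarrow> tot g \<Longrightarrow> tot (\<lambda>n. if c n = 0 then f n else g n)"
proof -
  assume c: "tot c" and f: "tot f" and g: "tot g"
  have "tot2 (nrec (\<lambda>x. pf x) (\<lambda>x y r. ps x))" by (rule tot_nrec) (intro tot_intros)+
  from tot2_app[OF this tot_pe[OF f g] c] show ?thesis unfolding nrec_ifz .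
qed

definition totP :: "(nat \<Rightarrow> bool) \<Rightarrow> bool" where
  "totP P \<longleftrightarrow> tot (\<lambda>n. if P n then 0 else 1)"

lemma tot_if[tot_intros]: "totP P \<Longrightarrow> tot f \<Longrightarrow> tot g \<Longrightarrow> tot (\<lambda>n. if P n then f n else g n)"
proof -
  assume a: "totP P" "tot f" "tot g"
  have "(\<lambda>n. if (if P n then 0 else 1::nat) = 0 then f n else g n) = (\<lambda>n. if P n then f n else g n)" by auto
  with tot_ifz[of "\<lambda>n. if P n then 0 else 1" f g] a show ?thesis unfolding totP_def by simp
qed

lemma totP_I: "tot c \<Longrightarrow> (\<And>n. P n \<longleftrightarrow> c n = 0) \<Longrightarrow> totP P"
proof -
  assume a: "tot c" "\<And>n. P n \<longleftrightarrow> c n = 0"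
  have "(\<lambda>n. if P n then 0 else 1::nat) = (\<lambda>n. if c n = 0 then 0 else 1)" using a(2) by auto
  with tot_ifz[OF a(1) tot_const tot_const, of 0 1] show ?thesis unfolding totP_def by simp
qed

lemma totP_le[tot_intros]: "tot f \<Longrightarrow> tot g \<Longrightarrow> totP (\<lambda>n. f n \<le> g n)"
  by (rule totP_I[where c="\<lambda>n. f n - g n"], (intro tot_intros)+, auto)
lemma totP_less[tot_intros]: "tot f \<Longrightarrow> tot g \<Longrightarrow> totP (\<lambda>n. f n < g n)"
  by (rule totP_I[where c="\<lambda>n. Suc (f n) - g n"], (intro tot_intros)+, auto)
lemma totP_eq[tot_intros]: "tot f \<Longrightarrow> tot g \<Longrightarrow> totP (\<lambda>n. f n = g n)"
  by (rule totP_I[where c="\<lambda>n. (f n - g n) + (g n - f n)"], (intro tot_intros)+, auto)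
lemma totP_not[tot_intros]: "totP P \<Longrightarrow> totP (\<lambda>n. \<not> P n)"
  by (rule totP_I[where c="\<lambda>n. if P n then 1 else 0"], (intro tot_intros)+, auto)
lemma totP_conj[tot_intros]: "totP P \<Longrightarrow> totP Q \<Longrightarrow> totP (\<lambda>n. P n \<and> Q n)"
  by (rule totP_I[where c="\<lambda>n. if P n then (if Q n then 0 else 1) else 1"], (intro tot_intros)+, auto)
lemma totP_disj[tot_intros]: "totP P \<Longrightarrow> totP Q \<Longrightarrow> totP (\<lambda>n. P n \<or> Q n)"
  by (rule totP_I[where c="\<lambda>n. if P n then 0 else (if Q n then 0 else 1)"], (intro tot_intros)+, auto)
lemma totP_const[tot_intros]: "totP (\<lambda>n. b)"
  by (rule totP_I[where c="\<lambda>n. if b then 0 else 1"], (intro tot_intros)+, auto)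

lemma nrec_par: "nrec (\<lambda>x. 0) (\<lambda>x y r. 1 - r) a b = b mod 2" by (induction b) (auto simp: mod_Suc)
lemma totP_even[tot_intros]: "tot f \<Longrightarrow> totP (\<lambda>n. even (f n))"
proof -
  assume f: "tot f"
  have "tot2 (nrec (\<lambda>x. 0) (\<lambda>x y r. 1 - r))" by (rule tot_nrec) (intro tot_intros)+
  from tot2_app[OF this tot_const f] have "tot (\<lambda>n. f n mod 2)" unfolding nrec_par .
  thus ?thesis by (rule totP_I) (simp add: even_iff_mod_2_eq_zero)
qed

lemma nrec_half: "nrec (\<lambda>x. 0) (\<lambda>x y r. if even y then r else Suc r) a b = b div 2"
  by (induction b) auto
lemma tot_half[tot_intros]: "tot f \<Longrightarrow> tot (\<lambda>n. f n div 2)"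
proof -
  assume f: "tot f"
  have "tot2 (nrec (\<lambda>x. 0) (\<lambda>x y r. if even y then r else Suc r))" by (rule tot_nrec) (intro tot_intros)+
  from tot2_app[OF this tot_const f] show ?thesis unfolding nrec_half .
qed

lemma tot_mult2[tot_intros]: "tot f \<Longrightarrow> tot (\<lambda>n. 2 * f n)"
  using tot_add[of f f] by (simp add: mult_2)

lemma tot_mu: "tot f \<Longrightarrow> (\<And>x. \<exists>y. f (pe x y) = 0) \<Longrightarrow> tot (\<lambda>x. LEAST y. f (pe x y) = 0)"
proof -
  assume f: "tot f" and ex: "\<And>x. \<exists>y. f (pe x y) = 0"
  have "mu (\<lambda>n. Some (f n)) = (\<lambda>x. Some (LEAST y. f (pe x y) = 0))"
    using ex by (auto simp: mu_def)
  with partrec.minim[OF f[unfolded tot_def]] show ?thesis unfolding tot_def by simp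
qed

section \<open>list codes\<close>

definition ctl :: "nat \<Rightarrow> nat" where "ctl c = ps (c - 1)"
definition chd :: "nat \<Rightarrow> nat" where "chd c = pf (c - 1)"
definition cdrop :: "nat \<Rightarrow> nat \<Rightarrow> nat" where "cdrop c k = (ctl ^^ k) c"
definition cnth :: "nat \<Rightarrow> nat \<Rightarrow> nat" where "cnth c k = chd (cdrop c k)"
definition clen :: "nat \<Rightarrow> nat" where "clen c = (LEAST k. cdrop c k = 0)"

lemma pd0: "prod_decode 0 = (0, 0)"
proof -
  have "prod_encode (0,0) = 0" by (simp add: prod_encode_def)
  thus ?thesis by (metis prod_encode_inverse)
qed
lemma ctl_enc[simp]: "ctl (list_encode xs) = list_encode (tl xs)"
  by (cases xs) (auto simp: ctl_def pd0)
lemma chd_enc[simp]: "xs \<noteq> [] \<Longrightarrow> chd (list_encode xs) = hd xs"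
  by (cases xs) (auto simp: chd_def)
lemma cdrop_enc[simp]: "cdrop (list_encode xs) k = list_encode (drop k xs)"
  unfolding cdrop_def by (induction k) (auto simp: drop_Suc tl_drop)
lemma cnth_enc[simp]: "k < length xs \<Longrightarrow> cnth (list_encode xs) k = xs ! k"
  unfolding cnth_def by (simp add: hd_drop_conv_nth)
lemma list_encode_0_iff: "list_encode xs = 0 \<longleftrightarrow> xs = []"
  by (cases xs) auto
lemma clen_enc[simp]: "clen (list_encode xs) = length xs"
  unfolding clen_def by (rule Least_equality) (auto simp: list_encode_0_iff)

lemma tot_ctl[tot_intros]: "tot f \<Longrightarrow> tot (\<lambda>n. ctl (f n))"
  unfolding ctl_def by (intro tot_intros)
lemma tot_chd[tot_intros]: "tot f \<Longrightarrow> tot (\<lambda>n. chd (f n))"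
  unfolding chd_def by (intro tot_intros)
lemma nrec_cdrop: "nrec (\<lambda>x. x) (\<lambda>x y r. ctl r) c k = cdrop c k"
  unfolding cdrop_def by (induction k) auto
lemma tot_cdrop[tot_intros]: "tot f \<Longrightarrow> tot g \<Longrightarrow> tot (\<lambda>n. cdrop (f n) (g n))"
proof -
  assume f: "tot f" and g: "tot g"
  have "tot2 (nrec (\<lambda>x. x) (\<lambda>x y r. ctl r))" by (rule tot_nrec) (intro tot_intros)+
  from tot2_app[OF this f g] show ?thesis unfolding nrec_cdrop .
qed
lemma tot_cnth[tot_intros]: "tot f \<Longrightarrow> tot g \<Longrightarrow> tot (\<lambda>n. cnth (f n) (g n))"
  unfolding cnth_def by (intro tot_intros)
lemma tot_clen[tot_intros]: "tot f \<Longrightarrow> tot (\<lambda>n. clen (f n))"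
proof -
  assume f: "tot f"
  have "tot (\<lambda>x. LEAST y. cdrop (pf (pe x y)) (ps (pe x y)) = 0)"
  proof (rule tot_mu)
    show "tot (\<lambda>n. cdrop (pf n) (ps n))" by (intro tot_intros)
    fix x
    have "cdrop x (clen x) = 0"
      using clen_enc[of "list_decode x"] cdrop_enc[of "list_decode x"] by simp
    thus "\<exists>y. cdrop (pf (pe x y)) (ps (pe x y)) = 0" by auto
  qed
  hence "tot clen" unfolding clen_def by simp
  from tot_comp[OF this f] show ?thesis .
qed

lemma totP_comp: "totP P \<Longrightarrow> tot f \<Longrightarrow> totP (\<lambda>n. P (f n))"
  unfolding totP_def using tot_comp[of "\<lambda>n. if P n then 0 else 1" f] by simp

section \<open>partial combinators\<close>

lemma pr_tot: "tot f \<Longrightarrow> (\<lambda>n. Some (f n)) \<in> partrec" unfolding tot_def .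

lemma pr_pre: "F \<in> partrec \<Longrightarrow> tot g \<Longrightarrow> (\<lambda>n. F (g n)) \<in> partrec"
  unfolding tot_def using partrec.comp[of F "\<lambda>n. Some (g n)"] by simp

lemma pr_post: "F \<in> partrec \<Longrightarrow> tot h \<Longrightarrow> (\<lambda>n. map_option h (F n)) \<in> partrec"
proof -
  assume a: "F \<in> partrec" "tot h"
  have "(\<lambda>n. Option.bind (F n) (\<lambda>n. Some (h n))) = (\<lambda>n. map_option h (F n))"
    by (rule ext, case_tac "F n") auto
  with partrec.comp[of "\<lambda>n. Some (h n)" F] a show ?thesis unfolding tot_def by simp
qed

lemma pr_pairid: "F \<in> partrec \<Longrightarrow> (\<lambda>n. map_option (\<lambda>a. pe n a) (F n)) \<in> partrec"
proof -
  assume a: "F \<in> partrec"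
  have "(\<lambda>n. Option.bind (Some n) (\<lambda>a. Option.bind (F n) (\<lambda>b. Some (pe a b)))) = (\<lambda>n. map_option (\<lambda>a. pe n a) (F n))"
    by (rule ext, case_tac "F n") auto
  with partrec.pair[OF partrec.ident a] show ?thesis by simp
qed

lemma pr_pair2: "F \<in> partrec \<Longrightarrow> G \<in> partrec \<Longrightarrow>
  (\<lambda>n. Option.bind (F n) (\<lambda>a. Option.bind (G n) (\<lambda>b. Some (pe a b)))) \<in> partrec"
  by (rule partrec.pair)

definition guard0 :: "nat \<Rightarrow> nat option" where "guard0 x = (if x = 0 then Some 0 else None)"
lemma pr_guard0: "guard0 \<in> partrec"
proof -
  have "mu (\<lambda>n. Some (pf n)) = guard0"
    by (rule ext) (auto simp: mu_def guard0_def)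
  with partrec.minim[OF partrec.pfst] show ?thesis by simp
qed

lemma pr_guard: "totP P \<Longrightarrow> F \<in> partrec \<Longrightarrow> (\<lambda>n. if P n then F n else None) \<in> partrec"
proof -
  assume P: "totP P" and F: "F \<in> partrec"
  have g: "(\<lambda>n. guard0 (if P n then 0 else 1)) \<in> partrec"
    by (rule pr_pre[OF pr_guard0 P[unfolded totP_def]])
  have "(\<lambda>n. map_option ps (Option.bind (guard0 (if P n then 0 else 1)) (\<lambda>a. Option.bind (F n) (\<lambda>b. Some (pe a b))))) \<in> partrec"
    by (rule pr_post[OF pr_pair2[OF g F]]) (intro tot_intros)
  moreover have "(\<lambda>n. map_option ps (Option.bind (guard0 (if P n then 0 else 1)) (\<lambda>a. Option.bind (F n) (\<lambda>b. Some (pe a b)))))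
     = (\<lambda>n. if P n then F n else None)"
    by (rule ext, case_tac "F n") (auto simp: guard0_def)
  ultimately show ?thesis by simp
qed



lemma pr_sel: "F \<in> partrec \<Longrightarrow> totP P \<Longrightarrow> (\<lambda>n. if P n then F n else Some 0) \<in> partrec"
proof -
  assume F: "F \<in> partrec" and P: "totP P"
  have pf': "(\<lambda>m. F (pf m)) \<in> partrec" by (rule pr_pre[OF F]) (intro tot_intros)
  have A: "prec (\<lambda>_. Some 0) (\<lambda>m. F (pf m)) \<in> partrec" by (rule partrec.prim_rec[OF partrec.zero pf'])
  have "(\<lambda>n. prec (\<lambda>_. Some 0) (\<lambda>m. F (pf m)) (pe n (if P n then 1 else 0))) \<in> partrec"
    by (rule pr_pre[OF A]) (intro tot_intros P)
  moreover have "(\<lambda>n. prec (\<lambda>_. Some 0) (\<lambda>m. F (pf m)) (pe n (if P n then 1 else 0))) = (\<lambda>n. if P n then F n else Some 0)"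
    by (rule ext) (simp add: prec_def)
  ultimately show ?thesis by simp
qed

lemma pr_if: "totP P \<Longrightarrow> F \<in> partrec \<Longrightarrow> G \<in> partrec \<Longrightarrow> (\<lambda>n. if P n then F n else G n) \<in> partrec"
proof -
  assume P: "totP P" and F: "F \<in> partrec" and G: "G \<in> partrec"
  have a: "(\<lambda>n. if P n then F n else Some 0) \<in> partrec" by (rule pr_sel[OF F P])
  have b: "(\<lambda>n. if \<not> P n then G n else Some 0) \<in> partrec" by (rule pr_sel[OF G]) (intro tot_intros P)
  have c: "(\<lambda>n. map_option (\<lambda>a. pe n a) (Option.bind (if P n then F n else Some 0) (\<lambda>a. Option.bind (if \<not> P n then G n else Some 0) (\<lambda>b. Some (pe a b))))) \<in> partrec"
    by (rule pr_pairid[OF pr_pair2[OF a b]])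
  have d: "(\<lambda>n. map_option (\<lambda>m. if P (pf m) then pf (ps m) else ps (ps m)) (map_option (\<lambda>a. pe n a) (Option.bind (if P n then F n else Some 0) (\<lambda>a. Option.bind (if \<not> P n then G n else Some 0) (\<lambda>b. Some (pe a b)))))) \<in> partrec"
    by (rule pr_post[OF c]) (intro tot_intros totP_comp[OF P])
  moreover have "(\<lambda>n. map_option (\<lambda>m. if P (pf m) then pf (ps m) else ps (ps m)) (map_option (\<lambda>a. pe n a) (Option.bind (if P n then F n else Some 0) (\<lambda>a. Option.bind (if \<not> P n then G n else Some 0) (\<lambda>b. Some (pe a b))))))
     = (\<lambda>n. if P n then F n else G n)"
    by (rule ext, case_tac "F n", case_tac[!] "G n") auto
  ultimately show ?thesis by simp
qed

lemma pr_bind: "F \<in> partrec \<Longrightarrow> G \<in> partrec \<Longrightarrow> (\<lambda>n. Option.bind (F n) (\<lambda>a. G (pe n a))) \<in> partrec"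
proof -
  assume F: "F \<in> partrec" and G: "G \<in> partrec"
  have "(\<lambda>n. Option.bind (map_option (\<lambda>a. pe n a) (F n)) G) = (\<lambda>n. Option.bind (F n) (\<lambda>a. G (pe n a)))"
    by (rule ext, case_tac "F n") auto
  with partrec.comp[OF G pr_pairid[OF F]] show ?thesis by simp
qed

definition bld :: "(nat \<Rightarrow> nat option) \<Rightarrow> nat \<Rightarrow> nat \<Rightarrow> nat option" where
  "bld F x t = (if \<forall>k<t. F (pe x k) \<noteq> None then Some (list_encode (map (\<lambda>k. the (F (pe x k))) [0..<t])) else None)"

lemma bld_prec_aux:
  assumes "y \<le> t"
  shows "prec_aux (\<lambda>_. Some 0)
     (\<lambda>m. map_option (\<lambda>z. Suc (pe (ps z) (ps (ps (pf z)))))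
        (map_option (\<lambda>a. pe m a) (F (pe (pf (pf m)) (ps (pf m) - 1 - pf (ps m)))))) (pe x t) y
   = (if \<forall>k. t - y \<le> k \<and> k < t \<longrightarrow> F (pe x k) \<noteq> None
      then Some (list_encode (map (\<lambda>k. the (F (pe x k))) [t - y..<t])) else None)"
  using assms
proof (induction y)
  case 0 thus ?case by simp
next
  case (Suc y)
  define k0 where "k0 = t - Suc y"
  have k0: "k0 < t" "Suc k0 = t - y" "t - 1 - y = k0" using Suc.prems by (auto simp: k0_def)
  have ups: "[k0..<t] = k0 # [t - y..<t]" using k0 by (simp add: upt_conv_Cons)
  have iff: "(\<forall>k. k0 \<le> k \<and> k < t \<longrightarrow> F (pe x k) \<noteq> None) \<longleftrightarrow>
             F (pe x k0) \<noteq> None \<and> (\<forall>k. t - y \<le> k \<and> k < t \<longrightarrow> F (pe x k) \<noteq> None)"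
    using k0 by (auto simp: le_Suc_eq) (metis Suc_leI le_antisym not_less_eq_eq)
  show ?case
    using Suc.IH[OF Suc_leD[OF Suc.prems]] k0 ups iff
    by (cases "F (pe x k0)") (auto simp: k0_def[symmetric])
qed

lemma pr_build: "F \<in> partrec \<Longrightarrow> (\<lambda>n. bld F (pf n) (ps n)) \<in> partrec"
proof -
  assume F: "F \<in> partrec"
  define g0 where "g0 = (\<lambda>m. map_option (\<lambda>z. Suc (pe (ps z) (ps (ps (pf z)))))
        (map_option (\<lambda>a. pe m a) (F (pe (pf (pf m)) (ps (pf m) - 1 - pf (ps m))))))"
  have g0: "g0 \<in> partrec" unfolding g0_def
    by (intro pr_post pr_pairid pr_pre[OF F]) (intro tot_intros)+
  have P: "prec (\<lambda>_. Some 0) g0 \<in> partrec" by (rule partrec.prim_rec[OF partrec.zero g0])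
  have "(\<lambda>n. prec (\<lambda>_. Some 0) g0 (pe n (ps n))) \<in> partrec" by (rule pr_pre[OF P]) (intro tot_intros)
  moreover have "(\<lambda>n. prec (\<lambda>_. Some 0) g0 (pe n (ps n))) = (\<lambda>n. bld F (pf n) (ps n))"
  proof (rule ext)
    fix n
    obtain x t where n: "n = pe x t" by (metis prod_decode_inverse prod.collapse)
    show "prec (\<lambda>_. Some 0) g0 (pe n (ps n)) = bld F (pf n) (ps n)"
      using bld_prec_aux[of t t F x] unfolding n g0_def bld_def prec_def by simp
  qed
  ultimately show ?thesis by simp
qed

lemma pr_build': "F \<in> partrec \<Longrightarrow> tot a \<Longrightarrow> tot b \<Longrightarrow> (\<lambda>n. bld F (a n) (b n)) \<in> partrec"
  using pr_pre[OF pr_build, of F "\<lambda>n. pe (a n) (b n)"] by (simp add: tot_pe)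

definition ctake :: "nat \<Rightarrow> nat \<Rightarrow> nat" where "ctake t c = list_encode (map (cnth c) [0..<t])"

lemma tot_ctake[tot_intros]: "tot f \<Longrightarrow> tot g \<Longrightarrow> tot (\<lambda>n. ctake (f n) (g n))"
proof -
  assume f: "tot f" and g: "tot g"
  have "(\<lambda>n. bld (\<lambda>z. Some (cnth (pf z) (ps z))) (g n) (f n)) \<in> partrec"
    by (rule pr_build'[OF pr_tot g f]) (intro tot_intros)
  moreover have "(\<lambda>n. bld (\<lambda>z. Some (cnth (pf z) (ps z))) (g n) (f n)) = (\<lambda>n. Some (ctake (f n) (g n)))"
    by (auto simp: bld_def ctake_def)
  ultimately show ?thesis unfolding tot_def by simp
qed

section \<open>prefix codes and computable functions\<close>

lemma clen_pc[simp]: "clen (prefix_code p m) = m" by (simp add: prefix_code_def)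
lemma cnth_pc[simp]: "i < m \<Longrightarrow> cnth (prefix_code p m) i = p i" by (simp add: prefix_code_def)
lemma ctake_pc[simp]: "t \<le> m \<Longrightarrow> ctake t (prefix_code p m) = prefix_code p t"
  unfolding ctake_def prefix_code_def by (intro arg_cong[where f=list_encode] map_cong) auto

lemma computableI:
  assumes "\<psi> \<in> partrec"
    and "\<And>p q n. F p = Some q \<Longrightarrow> \<exists>m. \<psi> (pe (prefix_code p m) n) = Some (q n)"
    and "\<And>p q n m v. F p = Some q \<Longrightarrow> \<psi> (pe (prefix_code p m) n) = Some v \<Longrightarrow> v = q n"
  shows "computableB F"
  unfolding computableB_def using assms by blast

lemma computableE:
  assumes "computableB F"
  obtains \<psi> where "\<psi> \<in> partrec"
    and "\<And>p q n. F p = Some q \<Longrightarrow> \<exists>m. \<psi> (pe (prefix_code p m) n) = Some (q n)"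
    and "\<And>p q n m v. F p = Some q \<Longrightarrow> \<psi> (pe (prefix_code p m) n) = Some v \<Longrightarrow> v = q n"
  using assms unfolding computableB_def by blast

lemma comp_map:
  assumes "tot \<phi>" "tot h"
  shows "computableB (\<lambda>p. Some (\<lambda>k. h (pe k (p (\<phi> k)))))"
proof (rule computableI)
  let ?\<psi> = "\<lambda>x. if \<phi> (ps x) < clen (pf x) then Some (h (pe (ps x) (cnth (pf x) (\<phi> (ps x))))) else None"
  show "?\<psi> \<in> partrec" by (intro pr_guard pr_tot) (intro tot_intros assms tot_comp[OF assms(1)] tot_comp[OF assms(2)])+
  fix p q n
  assume "Some (\<lambda>k. h (pe k (p (\<phi> k)))) = Some q"
  hence q: "q = (\<lambda>k. h (pe k (p (\<phi> k))))" by simp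
  show "\<exists>m. ?\<psi> (pe (prefix_code p m) n) = Some (q n)"
    by (rule exI[of _ "Suc (\<phi> n)"]) (simp add: q)
  fix m v
  assume "?\<psi> (pe (prefix_code p m) n) = Some v"
  thus "v = q n" by (simp add: q split: if_splits)
qed

lemma comp_pair:
  assumes "computableB F" "computableB G"
  shows "computableB (\<lambda>p. Option.bind (F p) (\<lambda>a. Option.bind (G p) (\<lambda>b. Some (pairB a b))))"
proof -
  obtain \<psi>1 where p1: "\<psi>1 \<in> partrec"
    and e1: "\<And>p q n. F p = Some q \<Longrightarrow> \<exists>m. \<psi>1 (pe (prefix_code p m) n) = Some (q n)"
    and c1: "\<And>p q n m v. F p = Some q \<Longrightarrow> \<psi>1 (pe (prefix_code p m) n) = Some v \<Longrightarrow> v = q n"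
    using computableE[OF assms(1)] by blast
  obtain \<psi>2 where p2: "\<psi>2 \<in> partrec"
    and e2: "\<And>p q n. G p = Some q \<Longrightarrow> \<exists>m. \<psi>2 (pe (prefix_code p m) n) = Some (q n)"
    and c2: "\<And>p q n m v. G p = Some q \<Longrightarrow> \<psi>2 (pe (prefix_code p m) n) = Some v \<Longrightarrow> v = q n"
    using computableE[OF assms(2)] by blast
  show ?thesis
  proof (rule computableI)
    let ?\<psi> = "\<lambda>x. if even (ps x) then \<psi>1 (pe (pf x) (ps x div 2)) else \<psi>2 (pe (pf x) (ps x div 2))"
    show "?\<psi> \<in> partrec" by (intro pr_if pr_pre[OF p1] pr_pre[OF p2]) (intro tot_intros)+
    fix p q n
    assume "Option.bind (F p) (\<lambda>a. Option.bind (G p) (\<lambda>b. Some (pairB a b))) = Some q"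
    then obtain a b where a: "F p = Some a" and b: "G p = Some b" and q: "q = pairB a b"
      by (auto split: Option.bind_splits)
    show "\<exists>m. ?\<psi> (pe (prefix_code p m) n) = Some (q n)"
    proof (cases "even n")
      case True
      from e1[OF a, of "n div 2"] True show ?thesis by (auto simp: q pairB_def)
    next
      case False
      from e2[OF b, of "n div 2"] False show ?thesis by (auto simp: q pairB_def)
    qed
    fix m v
    assume "?\<psi> (pe (prefix_code p m) n) = Some v"
    thus "v = q n" using c1[OF a] c2[OF b] by (auto simp: q pairB_def split: if_splits)
  qed
qed

lemma nth_le_list_encode: "k < length xs \<Longrightarrow> xs ! k \<le> list_encode xs"
proof (induction xs arbitrary: k)
  case Nil thus ?case by simp
next
  case (Cons x xs)
  show ?case
  proof (cases k)
    case 0 thus ?thesis using le_prod_encode_1[of x "list_encode xs"] by simp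
  next
    case (Suc k')
    with Cons have "xs ! k' \<le> list_encode xs" by simp
    thus ?thesis using Suc le_prod_encode_2[of "list_encode xs" x] by simp
  qed
qed

lemma cnth_le: "k < clen M \<Longrightarrow> cnth M k \<le> M"
  using nth_le_list_encode[of k "list_decode M"] cnth_enc[of k "list_decode M"] clen_enc[of "list_decode M"]
  by simp

lemma comp_comp:
  assumes "computableB F" "computableB G"
  shows "computableB (\<lambda>p. Option.bind (F p) G)"
proof -
  obtain \<psi>1 where p1: "\<psi>1 \<in> partrec"
    and e1: "\<And>p q n. F p = Some q \<Longrightarrow> \<exists>m. \<psi>1 (pe (prefix_code p m) n) = Some (q n)"
    and c1: "\<And>p q n m v. F p = Some q \<Longrightarrow> \<psi>1 (pe (prefix_code p m) n) = Some v \<Longrightarrow> v = q n"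
    using computableE[OF assms(1)] by blast
  obtain \<psi>2 where p2: "\<psi>2 \<in> partrec"
    and e2: "\<And>p q n. G p = Some q \<Longrightarrow> \<exists>m. \<psi>2 (pe (prefix_code p m) n) = Some (q n)"
    and c2: "\<And>p q n m v. G p = Some q \<Longrightarrow> \<psi>2 (pe (prefix_code p m) n) = Some v \<Longrightarrow> v = q n"
    using computableE[OF assms(2)] by blast
  define A where "A = (\<lambda>z. \<psi>1 (pe (ctake (cnth (clen (pf z)) (ps z)) (pf z)) (ps z)))"
  have A: "A \<in> partrec" unfolding A_def by (rule pr_pre[OF p1]) (intro tot_intros)
  define B where "B = (\<lambda>x. bld A (pf x) (clen (clen (pf x))))"
  have B: "B \<in> partrec" unfolding B_def by (rule pr_build'[OF A]) (intro tot_intros)+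
  show ?thesis
  proof (rule computableI)
    let ?\<psi> = "\<lambda>x. Option.bind (B x) (\<lambda>a. \<psi>2 (pe (ps (pe x a)) (ps (pf (pe x a)))))"
    have "(\<lambda>x. Option.bind (B x) (\<lambda>a. (\<lambda>z. \<psi>2 (pe (ps z) (ps (pf z)))) (pe x a))) \<in> partrec"
      by (rule pr_bind[OF B]) (rule pr_pre[OF p2], intro tot_intros)
    thus "?\<psi> \<in> partrec" by simp
    fix p q'' n
    assume "Option.bind (F p) G = Some q''"
    then obtain q where a: "F p = Some q" and b: "G q = Some q''" by (auto split: Option.bind_splits)
    obtain j where j: "\<psi>2 (pe (prefix_code q j) n) = Some (q'' n)" using e2[OF b] by blast
    have "\<forall>k. \<exists>m. \<psi>1 (pe (prefix_code p m) k) = Some (q k)" using e1[OF a] by blast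
    then obtain mk where mk: "\<And>k. \<psi>1 (pe (prefix_code p (mk k)) k) = Some (q k)" by metis
    define ms where "ms = map mk [0..<j]"
    define M where "M = list_encode ms"
    have lenM: "clen M = j" by (simp add: M_def ms_def)
    have nthM: "k < j \<Longrightarrow> cnth M k = mk k" for k by (simp add: M_def ms_def)
    have leM: "k < j \<Longrightarrow> mk k \<le> M" for k
      using nth_le_list_encode[of k ms] by (simp add: M_def ms_def)
    have Ak: "k < j \<Longrightarrow> A (pe (prefix_code p M) k) = Some (q k)" for k
      using mk[of k] by (simp add: A_def lenM nthM leM)
    have "B (pe (prefix_code p M) n) = Some (prefix_code q j)"
      using Ak by (auto simp: B_def bld_def lenM prefix_code_def intro!: arg_cong[where f=list_encode] map_cong)
    with j show "\<exists>m. ?\<psi> (pe (prefix_code p m) n) = Some (q'' n)" by (intro exI[of _ M]) simp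
    fix m v
    assume h: "?\<psi> (pe (prefix_code p m) n) = Some v"
    then obtain qc where qc: "B (pe (prefix_code p m) n) = Some qc" and v: "\<psi>2 (pe qc n) = Some v"
      by (auto split: Option.bind_splits)
    let ?j = "clen m"
    have all: "\<forall>k<?j. A (pe (prefix_code p m) k) \<noteq> None" and qc_eq: "qc = list_encode (map (\<lambda>k. the (A (pe (prefix_code p m) k))) [0..<?j])"
      using qc by (auto simp: B_def bld_def split: if_splits)
    have "k < ?j \<Longrightarrow> the (A (pe (prefix_code p m) k)) = q k" for k
    proof -
      assume k: "k < ?j"
      then obtain w where w: "A (pe (prefix_code p m) k) = Some w" using all by blast
      have le: "cnth m k \<le> m" by (rule cnth_le[OF k])
      from w have "\<psi>1 (pe (prefix_code p (cnth m k)) k) = Some w" by (simp add: A_def le)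
      from c1[OF a this] w show ?thesis by simp
    qed
    hence "qc = prefix_code q ?j" unfolding qc_eq prefix_code_def by (auto intro!: arg_cong[where f=list_encode] map_cong)
    with c2[OF b] v show "v = q'' n" by simp
  qed
qed

definition par :: "(baire \<Rightarrow> baire option) \<Rightarrow> baire \<Rightarrow> baire option" where
  "par F p = (if \<forall>i. F (compB i p) \<noteq> None then Some (\<lambda>k. the (F (compB (pf k) p)) (ps k)) else None)"

lemma pe_mono2: "l \<le> m \<Longrightarrow> pe i l \<le> pe i m"
proof -
  assume "l \<le> m"
  have "triangle (i + l) \<le> triangle (i + m)"
    unfolding triangle_def using \<open>l \<le> m\<close> by (intro div_le_mono mult_le_mono) auto
  thus ?thesis by (simp add: prod_encode_def)
qed

lemma comp_par:
  assumes "computableB F"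
  shows "computableB (par F)"
proof -
  obtain \<psi>1 where p1: "\<psi>1 \<in> partrec"
    and e1: "\<And>p q n. F p = Some q \<Longrightarrow> \<exists>m. \<psi>1 (pe (prefix_code p m) n) = Some (q n)"
    and c1: "\<And>p q n m v. F p = Some q \<Longrightarrow> \<psi>1 (pe (prefix_code p m) n) = Some v \<Longrightarrow> v = q n"
    using computableE[OF assms(1)] by blast
  define A where "A = (\<lambda>z. if pe (ps (pf z)) (ps z) < clen (pf (pf z)) then Some (cnth (pf (pf z)) (pe (ps (pf z)) (ps z))) else None)"
  have A: "A \<in> partrec" unfolding A_def by (intro pr_guard pr_tot) (intro tot_intros)+
  define B where "B = (\<lambda>x. bld A (pe (pf x) (pf (ps x))) (pf (clen (pf x))))"
  have B: "B \<in> partrec" unfolding B_def by (rule pr_build'[OF A]) (intro tot_intros)+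
  have bA: "\<And>c i t. (\<forall>l<t. pe i l < clen c) \<Longrightarrow> bld A (pe c i) t = Some (list_encode (map (\<lambda>l. cnth c (pe i l)) [0..<t]))"
    unfolding bld_def A_def by (auto intro!: arg_cong[where f=list_encode] map_cong)
  show ?thesis
  proof (rule computableI)
    let ?\<psi> = "\<lambda>x. Option.bind (B x) (\<lambda>a. \<psi>1 (pe (ps (pe x a)) (ps (ps (pf (pe x a))))))"
    have "(\<lambda>x. Option.bind (B x) (\<lambda>a. (\<lambda>z. \<psi>1 (pe (ps z) (ps (ps (pf z))))) (pe x a))) \<in> partrec"
      by (rule pr_bind[OF B]) (rule pr_pre[OF p1], intro tot_intros)
    thus "?\<psi> \<in> partrec" by simp
    fix p q n
    assume pq: "par F p = Some q"
    hence all: "\<forall>i. F (compB i p) \<noteq> None" and q: "q = (\<lambda>k. the (F (compB (pf k) p)) (ps k))"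
      by (auto simp: par_def split: if_splits)
    obtain i k where n: "n = pe i k" by (metis prod_decode_inverse prod.collapse)
    obtain qi where qi: "F (compB i p) = Some qi" using all by blast
    obtain m' where m': "\<psi>1 (pe (prefix_code (compB i p) m') k) = Some (qi k)" using e1[OF qi] by blast
    define M where "M = pe m' (Suc (pe i m'))"
    have pfM: "pf M = m'" by (simp add: M_def)
    have big: "l < m' \<Longrightarrow> pe i l < M" for l
      using pe_mono2[of l m' i] le_prod_encode_2[of "Suc (pe i m')" m'] unfolding M_def by linarith
    have "B (pe (prefix_code p M) n) = Some (prefix_code (compB i p) m')"
      unfolding B_def using big
      by (subst bA) (auto simp: pfM n prefix_code_def compB_def intro!: arg_cong[where f=list_encode] map_cong)
    hence "?\<psi> (pe (prefix_code p M) n) = Some (qi k)" using m' by (simp add: n)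
    thus "\<exists>m. ?\<psi> (pe (prefix_code p m) n) = Some (q n)" by (auto simp: q n qi)
    fix m v
    assume h: "?\<psi> (pe (prefix_code p m) n) = Some v"
    then obtain sc where sc: "B (pe (prefix_code p m) n) = Some sc" and v: "\<psi>1 (pe sc k) = Some v"
      by (auto split: Option.bind_splits simp: n)
    have "\<forall>l<pf m. A (pe (pe (prefix_code p m) i) l) \<noteq> None"
      using sc by (auto simp: B_def bld_def n split: if_splits)
    hence lt: "\<forall>l<pf m. pe i l < m" by (auto simp: A_def split: if_splits)
    have "sc = prefix_code (compB i p) (pf m)"
      using sc lt by (auto simp: B_def bA n prefix_code_def compB_def intro!: arg_cong[where f=list_encode] map_cong)
    with c1[OF qi] v show "v = q n" by (simp add: q n qi)
  qed
qed

lemma tot_multc[tot_intros]: "tot f \<Longrightarrow> tot (\<lambda>n. c * f n)"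
proof (induction c)
  case 0 thus ?case using tot_const[of 0] by simp
next
  case (Suc c)
  hence "tot (\<lambda>n. f n + c * f n)" by (intro tot_intros)
  thus ?case by simp
qed

definition lz :: "nat \<Rightarrow> nat" where "lz c = (LEAST l. clen c \<le> l \<or> cnth c l \<noteq> 0)"

lemma tot_lz[tot_intros]: "tot f \<Longrightarrow> tot (\<lambda>n. lz (f n))"
proof -
  assume f: "tot f"
  have "tot (\<lambda>x. LEAST y. (if clen (pf (pe x y)) \<le> ps (pe x y) \<or> cnth (pf (pe x y)) (ps (pe x y)) \<noteq> 0 then 0 else 1) = (0::nat))"
  proof (rule tot_mu)
    show "tot (\<lambda>z. if clen (pf z) \<le> ps z \<or> cnth (pf z) (ps z) \<noteq> 0 then 0 else 1)" by (intro tot_intros)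
    fix x show "\<exists>y. (if clen (pf (pe x y)) \<le> ps (pe x y) \<or> cnth (pf (pe x y)) (ps (pe x y)) \<noteq> 0 then 0 else 1) = (0::nat)"
      by (rule exI[of _ "clen x"]) simp
  qed
  moreover have "(\<lambda>x. LEAST y. (if clen (pf (pe x y)) \<le> ps (pe x y) \<or> cnth (pf (pe x y)) (ps (pe x y)) \<noteq> 0 then 0 else 1) = (0::nat)) = lz"
  proof (rule ext)
    fix x
    have e: "\<And>y. ((if clen x \<le> y \<or> cnth x y \<noteq> 0 then 0 else 1) = (0::nat)) = (clen x \<le> y \<or> cnth x y \<noteq> 0)" by simp
    show "(LEAST y. (if clen (pf (pe x y)) \<le> ps (pe x y) \<or> cnth (pf (pe x y)) (ps (pe x y)) \<noteq> 0 then 0 else 1) = (0::nat)) = lz x"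
      unfolding lz_def prod_encode_inverse fst_conv snd_conv e ..
  qed
  ultimately have "tot lz" by simp
  from tot_comp[OF this f] show ?thesis .
qed

lemma lz_wcode: "lz (wcode w) = length (takeWhile Not w)"
  unfolding lz_def wcode_def
proof (rule Least_equality)
  let ?n = "length (takeWhile Not w)"
  show "clen (list_encode (map (\<lambda>b. if b then 1 else 0) w)) \<le> ?n \<or> cnth (list_encode (map (\<lambda>b. if b then 1 else 0) w)) ?n \<noteq> 0"
  proof (cases "?n < length w")
    case True
    hence "w ! ?n" using nth_length_takeWhile[of Not w] by simp
    thus ?thesis using True by simp
  next
    case False thus ?thesis by simp
  qed
  fix l assume l: "clen (list_encode (map (\<lambda>b. if b then 1 else 0) w)) \<le> l \<or> cnth (list_encode (map (\<lambda>b. if b then 1 else 0) w)) l \<noteq> 0"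
  show "?n \<le> l"
  proof (rule ccontr)
    assume "\<not> ?n \<le> l"
    hence ln: "l < ?n" by simp
    hence lw: "l < length w" using length_takeWhile_le[of Not w] by linarith
    have "\<not> w ! l" using ln by (metis nth_mem set_takeWhileD takeWhile_nth)
    thus False using l lw by simp
  qed
qed

lemma clen_wcode[simp]: "clen (wcode w) = length w" by (simp add: wcode_def)
lemma cnth_wcode[simp]: "k < length w \<Longrightarrow> cnth (wcode w) k = (if w ! k then 1 else 0)" by (simp add: wcode_def)
lemma cdrop_wcode[simp]: "cdrop (wcode w) k = wcode (drop k w)" by (simp add: wcode_def drop_map)

lemma wcode_hI: "wcode (replicate i False @ [True]) = nrec (\<lambda>_. Suc (pe 1 0)) (\<lambda>x y r. Suc (pe 0 r)) 0 i"
  by (induction i) (simp_all add: wcode_def)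

lemma tot_whI[tot_intros]: "tot f \<Longrightarrow> tot (\<lambda>n. wcode (replicate (f n) False @ [True]))"
proof -
  assume f: "tot f"
  have "tot2 (nrec (\<lambda>_. Suc (pe 1 0)) (\<lambda>x y r. Suc (pe 0 r)))" by (rule tot_nrec) (intro tot_intros)+
  from tot2_app[OF this tot_const f] show ?thesis unfolding wcode_hI .
qed

lemma comp_id: "computableB (\<lambda>p. Some p)"
  using comp_map[of "\<lambda>k. k" "\<lambda>z. ps z"] by (simp add: tot_intros)

lemma comp_const: "computableB (\<lambda>p. Some (\<lambda>_. c))"
  using comp_map[of "\<lambda>k. k" "\<lambda>z. c"] by (simp add: tot_intros)



definition pref :: "cantor \<Rightarrow> nat \<Rightarrow> bool list" where "pref x n = map x [0..<n]"

lemma length_pref[simp]: "length (pref x n) = n" by (simp add: pref_def)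
lemma pref_nth[simp]: "k < n \<Longrightarrow> pref x n ! k = x k" by (simp add: pref_def)
lemma take_pref[simp]: "k \<le> n \<Longrightarrow> take k (pref x n) = pref x k"
  by (simp add: pref_def take_map min_def)
lemma pref_Suc: "pref x (Suc n) = pref x n @ [x n]" by (simp add: pref_def)

lemma play_pre_length[simp]: "length (play_pre s h n) = n"
  by (induction n) (auto simp: Let_def)

lemma play_pre_take: "m \<le> n \<Longrightarrow> take m (play_pre s h n) = play_pre s h m"
proof (induction n)
  case 0 thus ?case by simp
next
  case (Suc n)
  show ?case
  proof (cases "m = Suc n")
    case True thus ?thesis by (simp add: Let_def)
  next
    case False
    with Suc.prems have "m \<le> n" by simp
    thus ?thesis using Suc.IH by (simp add: Let_def)
  qed
qed

lemma play_pre_map: "play_pre s h n = pref (play s h) n"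
proof (rule nth_equalityI)
  show "length (play_pre s h n) = length (pref (play s h) n)" by simp
  fix k assume "k < length (play_pre s h n)"
  hence k: "Suc k \<le> n" by simp
  have "play_pre s h n ! k = take (Suc k) (play_pre s h n) ! k" by simp
  also have "\<dots> = play_pre s h (Suc k) ! k" using play_pre_take[OF k] by simp
  finally show "play_pre s h n ! k = pref (play s h) n ! k" using k by (simp add: play_def)
qed

lemma play_rec: "play s h n = (if n < length h then h ! n else s (pref (play s h) n))"
proof -
  have "play s h n = play_pre s h (Suc n) ! n" by (simp add: play_def)
  also have "\<dots> = (if n < length h then h ! n else s (play_pre s h n))"
    by (simp add: Let_def nth_append)
  finally show ?thesis by (simp add: play_pre_map)
qed

lemma play_unique:
  assumes "\<And>n. x n = (if n < length h then h ! n else s (pref x n))"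
  shows "play s h = x"
proof -
  have "\<forall>k<n. play s h k = x k" for n
  proof (induction n)
    case 0 thus ?case by simp
  next
    case (Suc n)
    have "pref (play s h) n = pref x n" using Suc.IH by (simp add: pref_def)
    hence "play s h n = x n" using play_rec[of s h n] assms[of n] by simp
    thus ?case using Suc.IH less_Suc_eq by auto
  qed
  thus ?thesis by auto
qed

lemma pref_play_hist: "n \<le> length h \<Longrightarrow> pref (play s h) n = take n h"
  by (rule nth_equalityI) (auto simp: play_rec[of s h])

lemma pref_prepend: "length v \<le> n \<Longrightarrow> pref (prepend v y) n = v @ pref y (n - length v)"
  by (rule nth_equalityI) (auto simp: prepend_def nth_append)

lemma pref_prepend_le: "n \<le> length v \<Longrightarrow> pref (prepend v y) n = take n v"
  by (rule nth_equalityI) (auto simp: prepend_def)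

lemma play_append: "play s (v @ w) = prepend v (play (\<lambda>u. s (v @ u)) w)"
proof (rule play_unique)
  fix n
  let ?Y = "play (\<lambda>u. s (v @ u)) w"
  show "prepend v ?Y n = (if n < length (v @ w) then (v @ w) ! n else s (pref (prepend v ?Y) n))"
  proof (cases "n < length v")
    case True thus ?thesis by (simp add: prepend_def nth_append)
  next
    case False
    hence "prepend v ?Y n = ?Y (n - length v)" by (simp add: prepend_def)
    also have "\<dots> = (if n - length v < length w then w ! (n - length v) else s (v @ pref ?Y (n - length v)))"
      by (subst play_rec) simp
    finally show ?thesis using False by (auto simp: nth_append pref_prepend)
  qed
qed

lemma play_nil_hist: "play s v = prepend v (play (\<lambda>u. s (v @ u)) [])"
  using play_append[of s v "[]"] by simp

lemma play_step: "play s w = play s (w @ [s w])"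
proof (rule sym, rule play_unique)
  fix n
  show "play s w n = (if n < length (w @ [s w]) then (w @ [s w]) ! n else s (pref (play s w) n))"
  proof (cases "n < length w")
    case True thus ?thesis by (simp add: play_rec[of s w n] nth_append)
  next
    case False
    show ?thesis
    proof (cases "n = length w")
      case True thus ?thesis using play_rec[of s w "length w"] pref_play_hist[of "length w" w s] by simp
    next
      case False2: False
      with False show ?thesis by (simp add: play_rec[of s w n])
    qed
  qed
qed

lemma prepend_pref: "prepend (pref x n) (\<lambda>k. x (k + n)) = x"
  by (rule ext) (simp add: prepend_def)

definition wins :: "bool \<Rightarrow> (bool list \<Rightarrow> bool) \<Rightarrow> cantor set \<Rightarrow> bool" where
  "wins b d W \<longleftrightarrow> (\<exists>\<sigma>. \<forall>\<tau>. (play (\<lambda>w. if d w = b then \<sigma> w else \<tau> w) [] \<in> W) = b)"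

lemma wins_True: "wins True d W = p1_wins d W"
  by (simp add: wins_def p1_wins_def)

lemma wins_False: "wins False d W = p2_wins d W"
proof -
  have e: "\<And>\<sigma> \<tau>. (\<lambda>w. if d w = False then \<sigma> w else \<tau> w) = (\<lambda>w. if d w then \<tau> w else \<sigma> w)"
    by auto
  show ?thesis unfolding wins_def p2_wins_def e by auto
qed

lemma not_both: "\<not> (p1_wins d W \<and> p2_wins d W)"
  unfolding p1_wins_def p2_wins_def by blast

definition dv :: "(bool list \<Rightarrow> bool) \<Rightarrow> bool list \<Rightarrow> bool list \<Rightarrow> bool" where
  "dv d v = (\<lambda>w. d (v @ w))"
definition Wv :: "cantor set \<Rightarrow> bool list \<Rightarrow> cantor set" where
  "Wv W v = {x. prepend v x \<in> W}"

lemma follow: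
  assumes pre: "pref X (length hst) = hst"
    and fol: "\<And>k. length hst \<le> k \<Longrightarrow> d (pref X k) = b \<Longrightarrow> X k = \<sigma> (drop (length hst) (pref X k))"
    and win: "\<And>\<tau>. (play (\<lambda>w. if d (hst @ w) = b then \<sigma> w else \<tau> w) [] \<in> Wv W hst) = b"
  shows "(X \<in> W) = b"
proof -
  define l0 where "l0 = length hst"
  define z where "z = (\<lambda>n. X (n + l0))"
  have X: "X = prepend hst z" using prepend_pref[of X l0] pre by (simp add: z_def l0_def)
  have pz: "pref X (l0 + n) = hst @ pref z n" for n
    using pref_prepend[of hst "l0 + n" z] X by (simp add: l0_def)
  have "play (\<lambda>w. if d (hst @ w) = b then \<sigma> w else z (length w)) [] = z"
  proof (rule play_unique)
    fix n
    have "z n = X (l0 + n)" by (simp add: z_def add.commute)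
    show "z n = (if n < length [] then [] ! n else (if d (hst @ pref z n) = b then \<sigma> (pref z n) else z (length (pref z n))))"
      using fol[of "l0 + n"] pz[of n] \<open>z n = X (l0 + n)\<close> by (auto simp: l0_def)
  qed
  with win[of "\<lambda>w. z (length w)"] have "(z \<in> Wv W hst) = b" by simp
  thus ?thesis using X by (simp add: Wv_def)
qed

lemma uniform:
  fixes d :: "bool list \<Rightarrow> bool" and W :: "cantor set"
  assumes det: "\<And>v. determined (dv d v) (Wv W v)"
  shows "\<exists>S. \<forall>v t. (play (\<lambda>w. if d w = p1_wins (dv d v) (Wv W v) then S w else t w) v \<in> W)
                = p1_wins (dv d v) (Wv W v)"
proof -
  define wA where "wA v = p1_wins (dv d v) (Wv W v)" for v
  have "\<forall>v. \<exists>\<sigma>. \<forall>\<tau>. (play (\<lambda>w. if d (v @ w) = wA v then \<sigma> w else \<tau> w) [] \<in> Wv W v) = wA v"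
  proof
    fix v show "\<exists>\<sigma>. \<forall>\<tau>. (play (\<lambda>w. if d (v @ w) = wA v then \<sigma> w else \<tau> w) [] \<in> Wv W v) = wA v"
    proof (cases "wA v")
      case True
      then have "wins True (dv d v) (Wv W v)" by (simp add: wA_def wins_True)
      thus ?thesis using True unfolding wins_def dv_def by simp
    next
      case False
      then have "p2_wins (dv d v) (Wv W v)" using det[of v] by (simp add: wA_def determined_def)
      hence "wins False (dv d v) (Wv W v)" by (simp add: wins_False)
      thus ?thesis using False unfolding wins_def dv_def by simp
    qed
  qed
  then have "\<exists>\<sigma>. \<forall>v. \<forall>\<tau>. (play (\<lambda>w. if d (v @ w) = wA v then \<sigma> v w else \<tau> w) [] \<in> Wv W v) = wA v"
    by (rule choice)
  then obtain \<sigma> where \<sigma>0: "\<forall>v. \<forall>\<tau>. (play (\<lambda>w. if d (v @ w) = wA v then \<sigma> v w else \<tau> w) [] \<in> Wv W v) = wA v"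
    by (rule exE)
  have \<sigma>: "\<And>v \<tau>. (play (\<lambda>w. if d (v @ w) = wA v then \<sigma> v w else \<tau> w) [] \<in> Wv W v) = wA v"
    using \<sigma>0 by blast
  define cons where "cons v w \<longleftrightarrow> take (length v) w = v \<and> length v \<le> length w \<and>
     (\<forall>k. length v \<le> k \<and> k < length w \<and> d (take k w) = wA v \<longrightarrow> w ! k = \<sigma> v (drop (length v) (take k w)))" for v w
  define bl where "bl w = (LEAST l. cons (take l w) w)" for w
  define S where "S w = \<sigma> (take (bl w) w) (drop (bl w) w)" for w
  have cons_self: "cons w w" for w unfolding cons_def by auto
  have bl_cons: "cons (take (bl w) w) w" for w unfolding bl_def
    by (rule LeastI[of _ "length w"]) (simp add: cons_self)
  have bl_le: "bl w \<le> length w" for w unfolding bl_def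
    by (rule Least_le) (simp add: cons_self)
  have consD: "cons v w \<Longrightarrow> length v \<le> k \<Longrightarrow> k < length w \<Longrightarrow> d (take k w) = wA v \<Longrightarrow> w ! k = \<sigma> v (drop (length v) (take k w))" for v w k
    unfolding cons_def by blast
  have cons_restr: "cons a w \<Longrightarrow> length a \<le> n \<Longrightarrow> n \<le> length w \<Longrightarrow> cons a (take n w)" for a w n
  proof -
    assume c: "cons a w" and an: "length a \<le> n" and nw: "n \<le> length w"
    show "cons a (take n w)" unfolding cons_def
    proof (intro conjI allI impI)
      show "take (length a) (take n w) = a" using c an by (simp add: cons_def min_def)
      show "length a \<le> length (take n w)" using an nw by simp
      fix k assume k: "length a \<le> k \<and> k < length (take n w) \<and> d (take k (take n w)) = wA a"
      hence "k < n" "k < length w" by auto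
      with k have "w ! k = \<sigma> a (drop (length a) (take k w))" using consD[OF c] by (simp add: min_def)
      thus "take n w ! k = \<sigma> a (drop (length a) (take k (take n w)))" using \<open>k < n\<close> by (simp add: min_def)
    qed
  qed
  have transfer: "cons v0 v \<Longrightarrow> wins (wA v0) (dv d v) (Wv W v)" for v0 v
  proof -
    assume c: "cons v0 v"
    let ?b = "wA v0"
    let ?l0 = "length v0"
    have l0v: "?l0 \<le> length v" using c by (simp add: cons_def)
    show ?thesis unfolding wins_def
    proof (rule exI[of _ "\<lambda>w. \<sigma> v0 (drop ?l0 v @ w)"], rule allI)
      fix \<tau>
      define y where "y = play (\<lambda>w. if dv d v w = ?b then \<sigma> v0 (drop ?l0 v @ w) else \<tau> w) []"
      define X where "X = prepend v y"
      have "(X \<in> W) = ?b"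
      proof (rule follow[where hst=v0 and \<sigma>="\<sigma> v0" and d=d])
        show "pref X (length v0) = v0"
          using c pref_prepend_le[of ?l0 v y] l0v by (simp add: X_def cons_def)
        show "\<And>\<tau>. (play (\<lambda>w. if d (v0 @ w) = ?b then \<sigma> v0 w else \<tau> w) [] \<in> Wv W v0) = ?b" by (rule \<sigma>)
        fix k assume k: "length v0 \<le> k" "d (pref X k) = ?b"
        show "X k = \<sigma> v0 (drop (length v0) (pref X k))"
        proof (cases "k < length v")
          case True
          then have "pref X k = take k v" by (simp add: X_def pref_prepend_le)
          moreover have "X k = v ! k" using True by (simp add: X_def prepend_def)
          ultimately show ?thesis using consD[OF c k(1) True] k(2) by simp
        next
          case False
          then have pk: "pref X k = v @ pref y (k - length v)" by (simp add: X_def pref_prepend)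
          have "X k = y (k - length v)" using False by (simp add: X_def prepend_def)
          also have "\<dots> = (if dv d v (pref y (k - length v)) = ?b then \<sigma> v0 (drop ?l0 v @ pref y (k - length v)) else \<tau> (pref y (k - length v)))"
            unfolding y_def by (subst play_rec) simp
          also have "\<dots> = \<sigma> v0 (drop ?l0 v @ pref y (k - length v))" using k(2) pk by (simp add: dv_def)
          also have "\<dots> = \<sigma> v0 (drop ?l0 (pref X k))" using pk l0v by simp
          finally show ?thesis .
        qed
      qed
      thus "(play (\<lambda>w. if dv d v w = ?b then \<sigma> v0 (drop ?l0 v @ w) else \<tau> w) [] \<in> Wv W v) = ?b"
        by (simp add: X_def Wv_def y_def)
    qed
  qed
  have same: "cons v0 v \<Longrightarrow> wA v0 = wA v" for v0 v
  proof -
    assume c: "cons v0 v"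
    have t: "wins (wA v0) (dv d v) (Wv W v)" by (rule transfer[OF c])
    show ?thesis
    proof (cases "wA v0")
      case True
      with t have "p1_wins (dv d v) (Wv W v)" by (simp add: wins_True)
      thus ?thesis using True by (simp add: wA_def)
    next
      case False
      with t have "p2_wins (dv d v) (Wv W v)" by (simp add: wins_False)
      hence "\<not> p1_wins (dv d v) (Wv W v)" using not_both by blast
      thus ?thesis using False by (simp add: wA_def)
    qed
  qed
  have main: "(play (\<lambda>w. if d w = wA v then S w else t w) v \<in> W) = wA v" for v t
  proof -
    define P where "P = (\<lambda>w. if d w = wA v then S w else t w)"
    define x where "x = play P v"
    define l0 where "l0 = bl v"
    define v0 where "v0 = take l0 v"
    have c0: "cons v0 v" using bl_cons by (simp add: v0_def l0_def)
    have l0v: "l0 \<le> length v" using bl_le[of v] by (simp add: l0_def)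
    have lv0: "length v0 = l0" using l0v by (simp add: v0_def min_def)
    have b: "wA v0 = wA v" by (rule same[OF c0])
    have px: "n \<le> length v \<Longrightarrow> pref x n = take n v" for n by (simp add: x_def pref_play_hist)
    have xlt: "k < length v \<Longrightarrow> x k = v ! k" for k by (simp add: x_def play_rec[of P v k])
    have xge: "length v \<le> k \<Longrightarrow> x k = P (pref x k)" for k by (simp add: x_def play_rec[of P v k])
    have pv0: "l0 \<le> n \<Longrightarrow> take l0 (pref x n) = v0" for n
      using px[OF l0v] by (simp add: v0_def)
    have low: "k < length v \<Longrightarrow> l0 \<le> k \<Longrightarrow> d (pref x k) = wA v0 \<Longrightarrow> x k = \<sigma> v0 (drop l0 (pref x k))" for k
      using consD[OF c0, of k] px[of k] xlt[of k] lv0 by simp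
    have high: "length v \<le> k \<Longrightarrow> d (pref x k) = wA v0 \<Longrightarrow> bl (pref x k) = l0 \<Longrightarrow> x k = \<sigma> v0 (drop l0 (pref x k))" for k
      using xge[of k] b pv0[of k] l0v by (simp add: P_def S_def)
    have key: "length v \<le> n \<Longrightarrow> bl (pref x n) = l0" for n
    proof (induction n rule: less_induct)
      case (less n)
      have c: "cons v0 (pref x n)"
        unfolding cons_def
      proof (intro conjI allI impI)
        show "take (length v0) (pref x n) = v0" using pv0[of n] less.prems l0v lv0 by simp
        show "length v0 \<le> length (pref x n)" using less.prems l0v lv0 by simp
        fix k assume k: "length v0 \<le> k \<and> k < length (pref x n) \<and> d (take k (pref x n)) = wA v0"
        hence kn: "k < n" and k0: "l0 \<le> k" and dk: "d (pref x k) = wA v0" using lv0 by auto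
        show "pref x n ! k = \<sigma> v0 (drop (length v0) (take k (pref x n)))"
        proof (cases "k < length v")
          case True thus ?thesis using low[OF True k0 dk] kn lv0 by simp
        next
          case False
          hence "bl (pref x k) = l0" using less.IH[OF kn] by simp
          thus ?thesis using high[of k] False dk kn lv0 by simp
        qed
      qed
      show ?case unfolding bl_def
      proof (rule Least_equality)
        show "cons (take l0 (pref x n)) (pref x n)" using c pv0[of n] less.prems l0v by simp
        fix l assume cl: "cons (take l (pref x n)) (pref x n)"
        show "l0 \<le> l"
        proof (rule ccontr)
          assume "\<not> l0 \<le> l"
          hence ll: "l < l0" by simp
          have "cons (take l (pref x n)) (take (length v) (pref x n))"
            by (rule cons_restr[OF cl]) (use ll l0v less.prems in auto)
          moreover have "take l (pref x n) = take l v" "take (length v) (pref x n) = v"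
            using px[of "length v"] px[of l] ll l0v less.prems by auto
          ultimately have "cons (take l v) v" by simp
          hence "bl v \<le> l" unfolding bl_def by (rule Least_le)
          with ll show False by (simp add: l0_def)
        qed
      qed
    qed
    have "(x \<in> W) = wA v0"
    proof (rule follow[where hst=v0 and \<sigma>="\<sigma> v0" and d=d])
      show "pref x (length v0) = v0" using px[OF l0v] lv0 by (simp add: v0_def)
      show "\<And>\<tau>. (play (\<lambda>w. if d (v0 @ w) = wA v0 then \<sigma> v0 w else \<tau> w) [] \<in> Wv W v0) = wA v0" by (rule \<sigma>)
      fix k assume k: "length v0 \<le> k" "d (pref x k) = wA v0"
      show "x k = \<sigma> v0 (drop (length v0) (pref x k))"
      proof (cases "k < length v")
        case True thus ?thesis using low k lv0 by simp
      next
        case False thus ?thesis using high[of k] key[of k] k lv0 by simp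
      qed
    qed
    thus ?thesis using b by (simp add: x_def P_def)
  qed
  show ?thesis using main unfolding wA_def by blast
qed

section \<open>The reduction game\<close>

type_synonym wl = "(bool list \<Rightarrow> bool) \<times> cantor set"

definition gturn :: "(nat \<Rightarrow> wl) \<Rightarrow> bool list \<Rightarrow> nat" where
  "gturn xs w = (let n = length (takeWhile Not w) in
     if Suc n < length w \<and> w ! Suc n then (if fst (xs n) (drop (Suc (Suc n)) w) then 0 else 1) else 0)"

definition gvalue :: "(nat \<Rightarrow> wl) \<Rightarrow> cantor \<Rightarrow> nat" where
  "gvalue xs x = (if \<forall>k. \<not> x k then 2 else let n = (LEAST k. x k) in
     if x (Suc n) then (if (\<lambda>k. x (k + Suc (Suc n))) \<in> snd (xs n) then 2 else 0) else 1)"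

definition gprefR :: "nat \<Rightarrow> nat \<Rightarrow> nat \<Rightarrow> bool" where
  "gprefR a x y \<longleftrightarrow> (a = 0 \<and> x < y \<and> y < 3) \<or> (a = 1 \<and> y < x \<and> x < 3)"

definition theGame :: "(nat \<Rightarrow> wl) \<Rightarrow> game" where
  "theGame xs = \<lparr>players = 2, outcomes = 3, turn = gturn xs, gpref = gprefR, gval = gvalue xs\<rparr>"

abbreviation hI :: "nat \<Rightarrow> bool list" where "hI i \<equiv> replicate i False @ [True]"
abbreviation uI :: "nat \<Rightarrow> bool list" where "uI i \<equiv> replicate i False @ [True, True]"

lemma tw_rep: "length (takeWhile Not (replicate i False @ True # r)) = i"
  by (induction i) auto

lemma gturn_h: "gturn xs (hI i) = 0"
  by (simp add: gturn_def tw_rep)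

lemma gturn_u: "gturn xs (uI i @ v) = (if fst (xs i) v then 0 else 1)"
proof -
  have "uI i @ v = replicate i False @ True # True # v" by simp
  thus ?thesis by (simp add: gturn_def tw_rep nth_append)
qed

lemma gturn_zeros: "gturn xs (replicate k False) = 0"
  by (simp add: gturn_def)

lemma gvalue_lt3: "gvalue xs x < 3"
  by (simp add: gvalue_def Let_def)

lemma gvalue_zeros: "gvalue xs zeros = 2"
  by (simp add: gvalue_def zeros_def)

lemma gvalue_pre: "gvalue xs (prepend (replicate i False @ [True, b]) y) = (if b then (if y \<in> snd (xs i) then 2 else 0) else 1)"
proof -
  let ?x = "prepend (replicate i False @ [True, b]) y"
  have xi: "?x i" by (simp add: prepend_def nth_append)
  have xk: "k < i \<Longrightarrow> \<not> ?x k" for k by (simp add: prepend_def nth_append)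
  have L: "(LEAST k. ?x k) = i"
  proof (rule Least_equality)
    show "?x i" by (rule xi)
    fix k assume "?x k" thus "i \<le> k" using xk not_less by blast
  qed
  have xs: "?x (Suc i) = b" by (simp add: prepend_def nth_append)
  have tl: "(\<lambda>k. ?x (k + Suc (Suc i))) = y" by (rule ext) (simp add: prepend_def)
  show ?thesis using xi L xs tl by (auto simp: gvalue_def Let_def)
qed

lemma wf_theGame: "wf_game (theGame xs)"
proof -
  have w: "wfP (\<lambda>y x. gprefR a x y)" for a
    by (rule wfp_if_convertible_to_nat[where f="\<lambda>y. if a = 0 then 3 - y else y"]) (auto simp: gprefR_def)
  have t: "gturn xs w < 2" for w by (simp add: gturn_def Let_def)
  show ?thesis unfolding wf_game_def theGame_def using w t gvalue_lt3 by (auto simp: gprefR_def)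
qed

lemma antag_theGame: "antagonistic_linear (theGame xs)"
  by (auto simp: antagonistic_linear_def theGame_def gprefR_def)

lemma val_h: "gvalue xs (play t (hI i)) = (if t (hI i) then (if play (\<lambda>w. t (uI i @ w)) [] \<in> snd (xs i) then 2 else 0) else 1)"
proof -
  have "play t (hI i) = play t (hI i @ [t (hI i)])" by (rule play_step)
  also have "\<dots> = prepend (replicate i False @ [True, t (hI i)]) (play (\<lambda>w. t (replicate i False @ [True, t (hI i)] @ w)) [])"
    using play_nil_hist[of t "replicate i False @ [True, t (hI i)]"] by simp
  finally show ?thesis by (cases "t (hI i)") (simp_all add: gvalue_pre)
qed

lemma spe_winner:
  assumes spe: "subgame_perfect (theGame xs) s"
    and det: "determined (fst (xs i)) (snd (xs i))"
  shows "(s (hI i) \<longrightarrow> p1_wins (fst (xs i)) (snd (xs i))) \<and> (\<not> s (hI i) \<longrightarrow> p2_wins (fst (xs i)) (snd (xs i)))"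
proof -
  define d where "d = fst (xs i)"
  define W where "W = snd (xs i)"
  let ?h = "hI i"
  let ?u = "uI i"
  have nash: "\<And>a s'. a < 2 \<Longrightarrow> (\<forall>w. gturn xs w \<noteq> a \<longrightarrow> s' w = s w) \<Longrightarrow> \<not> gprefR a (gvalue xs (play s ?h)) (gvalue xs (play s' ?h))"
    using spe unfolding subgame_perfect_def nash_at_def theGame_def by auto
  have uh: "?u = ?h @ [True]" by simp
  show ?thesis
  proof (intro conjI impI)
    assume sh: "s ?h"
    show "p1_wins (fst (xs i)) (snd (xs i))"
    proof (rule ccontr)
      assume np1: "\<not> p1_wins (fst (xs i)) (snd (xs i))"
      hence "p2_wins d W" using det by (simp add: determined_def d_def W_def)
      then obtain \<tau> where \<tau>: "\<And>\<sigma>. play (\<lambda>w. if d w then \<sigma> w else \<tau> w) [] \<notin> W" unfolding p2_wins_def by blast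
      define s1 where "s1 w = (if take (length ?u) w = ?u \<and> length ?u \<le> length w \<and> \<not> d (drop (length ?u) w) then \<tau> (drop (length ?u) w) else s w)" for w
      have ag1: "\<forall>w. gturn xs w \<noteq> 1 \<longrightarrow> s1 w = s w"
      proof (intro allI impI)
        fix w assume tw: "gturn xs w \<noteq> 1"
        show "s1 w = s w"
        proof (cases "take (length ?u) w = ?u \<and> length ?u \<le> length w \<and> \<not> d (drop (length ?u) w)")
          case True
          hence "w = ?u @ drop (length ?u) w" by (metis append_take_drop_id)
          hence "gturn xs w = 1" using True gturn_u[of xs i "drop (length ?u) w"] by (simp add: d_def)
          with tw show ?thesis by simp
        qed (auto simp: s1_def)
      qed
      have s1h: "s1 ?h = True" using sh by (simp add: s1_def)
      have s1u: "(\<lambda>w. s1 (?u @ w)) = (\<lambda>w. if d w then s (?u @ w) else \<tau> w)"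
        by (rule ext) (simp add: s1_def)
      have v1: "gvalue xs (play s1 ?h) = 0"
        using val_h[of xs s1 i] s1h s1u \<tau>[of "\<lambda>w. s (?u @ w)"] by (simp add: W_def)
      have "\<not> gprefR 1 (gvalue xs (play s ?h)) 0" using nash[of 1 s1] ag1 v1 by simp
      hence v0: "gvalue xs (play s ?h) = 0" using gvalue_lt3[of xs] by (auto simp: gprefR_def)
      define s2 where "s2 = s(?h := False)"
      have ag2: "\<forall>w. gturn xs w \<noteq> 0 \<longrightarrow> s2 w = s w" using gturn_h[of xs i] by (auto simp: s2_def)
      have "gvalue xs (play s2 ?h) = 1" using val_h[of xs s2 i] by (simp add: s2_def)
      with nash[of 0 s2] ag2 v0 show False by (simp add: gprefR_def)
    qed
  next
    assume sh: "\<not> s ?h"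
    show "p2_wins (fst (xs i)) (snd (xs i))"
    proof (rule ccontr)
      assume np2: "\<not> p2_wins (fst (xs i)) (snd (xs i))"
      hence "p1_wins d W" using det by (simp add: determined_def d_def W_def)
      then obtain \<sigma> where \<sigma>: "\<And>\<tau>. play (\<lambda>w. if d w then \<sigma> w else \<tau> w) [] \<in> W" unfolding p1_wins_def by blast
      define s3 where "s3 w = (if w = ?h then True else if take (length ?u) w = ?u \<and> length ?u \<le> length w \<and> d (drop (length ?u) w) then \<sigma> (drop (length ?u) w) else s w)" for w
      have ag3: "\<forall>w. gturn xs w \<noteq> 0 \<longrightarrow> s3 w = s w"
      proof (intro allI impI)
        fix w assume tw: "gturn xs w \<noteq> 0"
        have "w \<noteq> ?h" using tw gturn_h[of xs i] by auto
        show "s3 w = s w"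
        proof (cases "take (length ?u) w = ?u \<and> length ?u \<le> length w \<and> d (drop (length ?u) w)")
          case True
          hence "w = ?u @ drop (length ?u) w" by (metis append_take_drop_id)
          hence "gturn xs w = 0" using True gturn_u[of xs i "drop (length ?u) w"] by (simp add: d_def)
          with tw show ?thesis by simp
        qed (use \<open>w \<noteq> ?h\<close> in \<open>auto simp: s3_def\<close>)
      qed
      have s3h: "s3 ?h = True" by (simp add: s3_def)
      have s3u: "(\<lambda>w. s3 (?u @ w)) = (\<lambda>w. if d w then \<sigma> w else s (?u @ w))"
        by (rule ext) (simp add: s3_def)
      have v3: "gvalue xs (play s3 ?h) = 2"
        using val_h[of xs s3 i] s3h s3u \<sigma>[of "\<lambda>w. s (?u @ w)"] by (simp add: W_def)
      have "gvalue xs (play s ?h) = 1" using val_h[of xs s i] sh by simp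
      with nash[of 0 s3] ag3 v3 show False by (simp add: gprefR_def)
    qed
  qed
qed

lemma word_cases:
  "(\<exists>k. w = replicate k False) \<or> (\<exists>i. w = hI i) \<or> (\<exists>i v. w = hI i @ False # v) \<or> (\<exists>i v. w = uI i @ v)"
proof -
  define t where "t = takeWhile Not w"
  define r where "r = dropWhile Not w"
  define n where "n = length t"
  have "replicate (length t) False = t"
    unfolding t_def by (rule replicate_length_same) (auto dest: set_takeWhileD)
  hence w2: "w = replicate n False @ r" unfolding n_def t_def r_def by (metis takeWhile_dropWhile_id)
  show ?thesis
  proof (cases r)
    case Nil thus ?thesis using w2 by blast
  next
    case (Cons a r')
    have "\<not> Not (hd r)" unfolding r_def by (rule hd_dropWhile) (simp add: Cons[unfolded r_def])
    hence a: "a" using Cons by simp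
    show ?thesis
    proof (cases r')
      case Nil
      hence "w = hI n" using w2 Cons a by simp
      thus ?thesis by blast
    next
      case (Cons b v)
      show ?thesis
      proof (cases b)
        case True
        with w2 \<open>r = a # r'\<close> a Cons have "w = uI n @ v" by simp
        thus ?thesis by blast
      next
        case False
        with w2 \<open>r = a # r'\<close> a Cons have "w = hI n @ False # v" by simp
        thus ?thesis by blast
      qed
    qed
  qed
qed

lemma val_u: "gvalue xs (play t (uI i @ v)) = (if play (\<lambda>z. t (uI i @ z)) v \<in> snd (xs i) then 2 else 0)"
  using play_append[of t "uI i" v] gvalue_pre[of xs i True] by simp

lemma val_f: "gvalue xs (play t (hI i @ False # v)) = 1"
  using play_append[of t "replicate i False @ [True, False]" v] gvalue_pre[of xs i False] by simp

lemma play_zeros: "(\<And>n. t (replicate n False) = False) \<Longrightarrow> play t (replicate k False) = zeros"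
  by (rule play_unique) (auto simp: zeros_def pref_def map_replicate_const)

lemma spe_exists:
  assumes det: "\<And>i v. determined (dv (fst (xs i)) v) (Wv (snd (xs i)) v)"
  shows "\<exists>s. subgame_perfect (theGame xs) s"
proof -
  define wA where "wA i v = p1_wins (dv (fst (xs i)) v) (Wv (snd (xs i)) v)" for i v
  have "\<forall>i. \<exists>S. \<forall>v t. (play (\<lambda>w. if fst (xs i) w = wA i v then S w else t w) v \<in> snd (xs i)) = wA i v"
    using uniform det unfolding wA_def by blast
  then have "\<exists>S. \<forall>i. \<forall>v t. (play (\<lambda>w. if fst (xs i) w = wA i v then S i w else t w) v \<in> snd (xs i)) = wA i v"
    by (rule choice)
  then obtain S where S0: "\<forall>i. \<forall>v t. (play (\<lambda>w. if fst (xs i) w = wA i v then S i w else t w) v \<in> snd (xs i)) = wA i v"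
    by (rule exE)
  have S: "\<And>i v t. (play (\<lambda>w. if fst (xs i) w = wA i v then S i w else t w) v \<in> snd (xs i)) = wA i v"
    using S0 by blast
  have dev: "(\<And>z. fst (xs i) z = wA i v \<Longrightarrow> t z = S i z) \<Longrightarrow> (play t v \<in> snd (xs i)) = wA i v" for i v t
  proof -
    assume ag: "\<And>z. fst (xs i) z = wA i v \<Longrightarrow> t z = S i z"
    have "(\<lambda>w. if fst (xs i) w = wA i v then S i w else t w) = t" using ag by (auto intro!: ext)
    with S[of i v t] show ?thesis by simp
  qed
  define s where "s w = (let n = length (takeWhile Not w) in if n < length w then
      (if Suc n = length w then wA n [] else if w ! Suc n then S n (drop (Suc (Suc n)) w) else False) else False)" for w
  have s_zeros: "s (replicate k False) = False" for k by (simp add: s_def)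
  have s_h: "s (hI i) = wA i []" for i by (simp add: s_def tw_rep)
  have s_u: "s (uI i @ v) = S i v" for i v
  proof -
    have "uI i @ v = replicate i False @ True # True # v" by simp
    thus ?thesis by (simp add: s_def tw_rep nth_append)
  qed
  have s_u': "(\<lambda>z. s (uI i @ z)) = S i" for i using s_u by auto
  have "subgame_perfect (theGame xs) s"
    unfolding subgame_perfect_def nash_at_def
  proof (intro allI impI)
    fix w a s'
    assume a: "a < players (theGame xs)" and ag: "\<forall>w. turn (theGame xs) w \<noteq> a \<longrightarrow> s' w = s w"
    have a2: "a = 0 \<or> a = 1" using a by (auto simp: theGame_def)
    have ag': "gturn xs z \<noteq> a \<Longrightarrow> s' z = s z" for z using ag by (simp add: theGame_def)
    show "\<not> gpref (theGame xs) a (gval (theGame xs) (play s w)) (gval (theGame xs) (play s' w))"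
      unfolding theGame_def
    proof (simp)
      show "\<not> gprefR a (gvalue xs (play s w)) (gvalue xs (play s' w))"
        using word_cases[of w]
      proof (elim disjE exE)
        fix k assume wk: "w = replicate k False"
        have c: "play s w = zeros" using play_zeros[of s k] s_zeros wk by simp
        show ?thesis
        proof (cases "a = 0")
          case True thus ?thesis using c gvalue_zeros[of xs] by (simp add: gprefR_def)
        next
          case False
          have "s' (replicate n False) = False" for n using ag'[of "replicate n False"] gturn_zeros[of xs n] False s_zeros by simp
          hence "play s' w = zeros" using play_zeros[of s' k] wk by simp
          thus ?thesis using c by (simp add: gprefR_def)
        qed
      next
        fix i v assume wf: "w = hI i @ False # v"
        show ?thesis using val_f[of xs s i v] val_f[of xs s' i v] wf by (simp add: gprefR_def)
      next
        fix i assume wh: "w = hI i"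
        let ?t = "\<lambda>z. s' (uI i @ z)"
        have cur: "gvalue xs (play s w) = (if wA i [] then 2 else 1)"
          using val_h[of xs s i] s_h[of i] s_u'[of i] S[of i "[]" "S i"] wh by simp
        have dv0: "gvalue xs (play s' w) = (if s' (hI i) then (if play ?t [] \<in> snd (xs i) then 2 else 0) else 1)"
          using val_h[of xs s' i] wh by simp
        show ?thesis
        proof (cases "a = 0")
          case True
          have "\<not> wA i [] \<Longrightarrow> (play ?t [] \<in> snd (xs i)) = wA i []"
          proof (rule dev)
            fix z assume "\<not> wA i []" "fst (xs i) z = wA i []"
            hence "gturn xs (uI i @ z) \<noteq> a" using True gturn_u[of xs i z] by simp
            thus "?t z = S i z" using ag' s_u by simp
          qed
          thus ?thesis using cur dv0 True by (auto simp: gprefR_def)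
        next
          case False
          hence a1: "a = 1" using a2 by simp
          have sh: "s' (hI i) = s (hI i)" using ag'[of "hI i"] gturn_h[of xs i] a1 by simp
          have "wA i [] \<Longrightarrow> (play ?t [] \<in> snd (xs i)) = wA i []"
          proof (rule dev)
            fix z assume "wA i []" "fst (xs i) z = wA i []"
            hence "gturn xs (uI i @ z) \<noteq> a" using a1 gturn_u[of xs i z] by simp
            thus "?t z = S i z" using ag' s_u by simp
          qed
          thus ?thesis using cur dv0 a1 sh s_h[of i] by (auto simp: gprefR_def)
        qed
      next
        fix i v assume wu: "w = uI i @ v"
        let ?t = "\<lambda>z. s' (uI i @ z)"
        have cur: "gvalue xs (play s w) = (if wA i v then 2 else 0)"
          using val_u[of xs s i v] s_u'[of i] S[of i v "S i"] wu by simp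
        have dv0: "gvalue xs (play s' w) = (if play ?t v \<in> snd (xs i) then 2 else 0)"
          using val_u[of xs s' i v] wu by simp
        show ?thesis
        proof (cases "a = 0")
          case True
          have "\<not> wA i v \<Longrightarrow> (play ?t v \<in> snd (xs i)) = wA i v"
          proof (rule dev)
            fix z assume "\<not> wA i v" "fst (xs i) z = wA i v"
            hence "gturn xs (uI i @ z) \<noteq> a" using True gturn_u[of xs i z] by simp
            thus "?t z = S i z" using ag' s_u by simp
          qed
          thus ?thesis using cur dv0 True by (auto simp: gprefR_def)
        next
          case False
          hence a1: "a = 1" using a2 by simp
          have "wA i v \<Longrightarrow> (play ?t v \<in> snd (xs i)) = wA i v"
          proof (rule dev)
            fix z assume "wA i v" "fst (xs i) z = wA i v"
            hence "gturn xs (uI i @ z) \<noteq> a" using a1 gturn_u[of xs i z] by simp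
            thus "?t z = S i z" using ag' s_u by simp
          qed
          thus ?thesis using cur dv0 a1 by (auto simp: gprefR_def)
        qed
      qed
    qed
  qed
  thus ?thesis by blast
qed



lemma prepend_prepend: "prepend a (prepend b y) = prepend (a @ b) y"
  by (rule ext) (auto simp: prepend_def nth_append)

lemma decomp:
  assumes "\<not> (\<forall>k. \<not> x k)"
  defines "n \<equiv> LEAST k. x k"
  shows "x = prepend (replicate n False @ [True, x (Suc n)]) (\<lambda>k. x (k + Suc (Suc n)))"
proof (rule ext)
  fix m
  have xn: "x n" unfolding n_def using assms(1) by (metis LeastI)
  have lt: "k < n \<Longrightarrow> \<not> x k" for k unfolding n_def by (rule not_less_Least)
  show "x m = prepend (replicate n False @ [True, x (Suc n)]) (\<lambda>k. x (k + Suc (Suc n))) m"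
  proof (cases "m < n")
    case True thus ?thesis using lt by (simp add: prepend_def nth_append)
  next
    case False
    show ?thesis
    proof (cases "m = n")
      case True thus ?thesis using xn by (simp add: prepend_def nth_append)
    next
      case False2: False
      show ?thesis
      proof (cases "m = Suc n")
        case True thus ?thesis by (simp add: prepend_def nth_append)
      next
        case False3: False
        with False False2 have m: "m \<ge> Suc (Suc n)" by simp
        have "prepend (replicate n False @ [True, x (Suc n)]) (\<lambda>k. x (k + Suc (Suc n))) m = x (m - Suc (Suc n) + Suc (Suc n))"
          using m by (simp add: prepend_def)
        also have "m - Suc (Suc n) + Suc (Suc n) = m" using m by simp
        finally show ?thesis by simp
      qed
    qed
  qed
qed

lemma omega_op_mem: "x \<in> omega_op As \<longleftrightarrow> x = zeros \<or> (\<exists>n y. y \<in> As n \<and> x = prepend (replicate n False @ [True]) y)"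
  by (auto simp: omega_op_def)

lemma E2: "{x. gvalue xs x = 2} = omega_op (\<lambda>n. prepend [True] ` snd (xs n))"
proof (rule set_eqI)
  fix x
  show "x \<in> {x. gvalue xs x = 2} \<longleftrightarrow> x \<in> omega_op (\<lambda>n. prepend [True] ` snd (xs n))"
  proof
    assume v: "x \<in> {x. gvalue xs x = 2}"
    show "x \<in> omega_op (\<lambda>n. prepend [True] ` snd (xs n))"
    proof (cases "\<forall>k. \<not> x k")
      case True hence "x = zeros" by (auto simp: zeros_def)
      thus ?thesis by (simp add: omega_op_mem)
    next
      case False
      define n where "n = (LEAST k. x k)"
      have x: "x = prepend (replicate n False @ [True, x (Suc n)]) (\<lambda>k. x (k + Suc (Suc n)))"
        using decomp[OF False] by (simp add: n_def)
      have "gvalue xs x = (if x (Suc n) then (if (\<lambda>k. x (k + Suc (Suc n))) \<in> snd (xs n) then 2 else 0) else 1)"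
        by (subst x, rule gvalue_pre)
      with v have "x (Suc n)" "(\<lambda>k. x (k + Suc (Suc n))) \<in> snd (xs n)" by (auto split: if_splits)
      hence "x = prepend (replicate n False @ [True]) (prepend [True] (\<lambda>k. x (k + Suc (Suc n))))"
        using x by (simp add: prepend_prepend)
      thus ?thesis unfolding omega_op_mem using \<open>(\<lambda>k. x (k + Suc (Suc n))) \<in> snd (xs n)\<close> by blast
    qed
  next
    assume "x \<in> omega_op (\<lambda>n. prepend [True] ` snd (xs n))"
    then consider "x = zeros" | n y where "y \<in> snd (xs n)" "x = prepend (replicate n False @ [True]) (prepend [True] y)"
      unfolding omega_op_mem by blast
    thus "x \<in> {x. gvalue xs x = 2}"
    proof cases
      case 1 thus ?thesis by (simp add: gvalue_zeros)
    next
      case 2 thus ?thesis using gvalue_pre[of xs n True y] by (simp add: prepend_prepend)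
    qed
  qed
qed

lemma E12: "{x. gvalue xs x \<in> {1, 2}} = omega_op (\<lambda>n. prepend [True] ` snd (xs n) \<union> prepend [False] ` UNIV)"
proof (rule set_eqI)
  fix x
  show "x \<in> {x. gvalue xs x \<in> {1,2}} \<longleftrightarrow> x \<in> omega_op (\<lambda>n. prepend [True] ` snd (xs n) \<union> prepend [False] ` UNIV)"
  proof
    assume v: "x \<in> {x. gvalue xs x \<in> {1,2}}"
    show "x \<in> omega_op (\<lambda>n. prepend [True] ` snd (xs n) \<union> prepend [False] ` UNIV)"
    proof (cases "\<forall>k. \<not> x k")
      case True hence "x = zeros" by (auto simp: zeros_def)
      thus ?thesis by (simp add: omega_op_mem)
    next
      case False
      define n where "n = (LEAST k. x k)"
      define y where "y = (\<lambda>k. x (k + Suc (Suc n)))"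
      have x: "x = prepend (replicate n False @ [True, x (Suc n)]) y"
        using decomp[OF False] by (simp add: n_def y_def)
      have "gvalue xs x = (if x (Suc n) then (if y \<in> snd (xs n) then 2 else 0) else 1)"
        by (subst x, rule gvalue_pre)
      with v have c: "(x (Suc n) \<and> y \<in> snd (xs n)) \<or> \<not> x (Suc n)" by (auto split: if_splits)
      have "x = prepend (replicate n False @ [True]) (prepend [x (Suc n)] y)"
        using x by (simp add: prepend_prepend)
      moreover have "prepend [x (Suc n)] y \<in> prepend [True] ` snd (xs n) \<union> prepend [False] ` UNIV"
        using c by (cases "x (Suc n)") auto
      ultimately show ?thesis unfolding omega_op_mem by blast
    qed
  next
    assume "x \<in> omega_op (\<lambda>n. prepend [True] ` snd (xs n) \<union> prepend [False] ` UNIV)"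
    then consider "x = zeros" | n y where "y \<in> snd (xs n)" "x = prepend (replicate n False @ [True]) (prepend [True] y)"
      | n y where "x = prepend (replicate n False @ [True]) (prepend [False] y)"
      unfolding omega_op_mem by blast
    thus "x \<in> {x. gvalue xs x \<in> {1,2}}"
    proof cases
      case 1 thus ?thesis by (simp add: gvalue_zeros)
    next
      case 2 thus ?thesis using gvalue_pre[of xs n True y] by (simp add: prepend_prepend)
    next
      case 3 thus ?thesis using gvalue_pre[of xs n False y] by (simp add: prepend_prepend)
    qed
  qed
qed

lemma upper_cases:
  assumes "a < 2" "upper_set (theGame xs) a U"
  shows "(a = 0 \<and> (U = {} \<or> U = {2} \<or> U = {1,2} \<or> U = {0,1,2})) \<or>
         (a = 1 \<and> (U = {} \<or> U = {0} \<or> U = {0,1} \<or> U = {0,1,2}))"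
proof -
  have sub: "x \<in> U \<Longrightarrow> x = 0 \<or> x = 1 \<or> x = 2" for x
    using assms(2) by (auto simp: upper_set_def theGame_def)
  have up: "x \<in> U \<Longrightarrow> gprefR a x y \<Longrightarrow> y \<in> U" for x y
    using assms(2) by (auto simp: upper_set_def theGame_def)
  have a: "a = 0 \<or> a = 1" using assms(1) by auto
  have eqI: "U = V" if "\<And>x. x \<in> V \<Longrightarrow> x \<in> U" "\<And>x. x \<in> U \<Longrightarrow> x = 0 \<or> x = 1 \<or> x = 2 \<Longrightarrow> x \<in> V" for V
    using that sub by blast
  show ?thesis
  proof (cases "a = 0")
    case True
    have g01: "gprefR a 0 1" "gprefR a 1 2" using True by (auto simp: gprefR_def)
    show ?thesis
    proof (cases "0 \<in> U")
      case True
      hence "1 \<in> U" "2 \<in> U" using up g01 by blast+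
      hence "U = {0,1,2}" using True by (intro eqI) auto
      thus ?thesis using \<open>a = 0\<close> by simp
    next
      case n0: False
      show ?thesis
      proof (cases "1 \<in> U")
        case True
        hence "2 \<in> U" using up g01 by blast+
        hence "U = {1,2}" using True n0 by (intro eqI) auto
        thus ?thesis using \<open>a = 0\<close> by simp
      next
        case n1: False
        show ?thesis
        proof (cases "2 \<in> U")
          case True
          hence "U = {2}" using n0 n1 by (intro eqI) auto
          thus ?thesis using \<open>a = 0\<close> by simp
        next
          case False
          hence "U = {}" using n0 n1 by (intro eqI) auto
          thus ?thesis using \<open>a = 0\<close> by simp
        qed
      qed
    qed
  next
    case False
    hence a1: "a = 1" using a by simp
    have g01: "gprefR a 2 1" "gprefR a 1 0" using a1 by (auto simp: gprefR_def)
    show ?thesis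
    proof (cases "2 \<in> U")
      case True
      hence "1 \<in> U" "0 \<in> U" using up g01 by blast+
      hence "U = {0,1,2}" using True by (intro eqI) auto
      thus ?thesis using a1 by simp
    next
      case n0: False
      show ?thesis
      proof (cases "1 \<in> U")
        case True
        hence "0 \<in> U" using up g01 by blast+
        hence "U = {0,1}" using True n0 by (intro eqI) auto
        thus ?thesis using a1 by simp
      next
        case n1: False
        show ?thesis
        proof (cases "0 \<in> U")
          case True
          hence "U = {0}" using n0 n1 by (intro eqI) auto
          thus ?thesis using a1 by simp
        next
          case False
          hence "U = {}" using n0 n1 by (intro eqI) auto
          thus ?thesis using a1 by simp
        qed
      qed
    qed
  qed
qed

section \<open>the name map\<close>

definition tcode :: "nat \<Rightarrow> nat" where
  "tcode c = pe (lz c) (pe 0 (cdrop c (Suc (Suc (lz c)))))"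
definition tcond :: "nat \<Rightarrow> bool" where
  "tcond c \<longleftrightarrow> Suc (lz c) < clen c \<and> cnth c (Suc (lz c)) = 1"

definition phiR :: "nat \<Rightarrow> nat" where
  "phiR k = (if pf k = 2 then 2 * tcode (ps k) else if pf k = 4 then
     (if ps (ps k) = 0 then 0 else
      if pf (ps k) = pe 0 4 \<or> pf (ps k) = pe 1 3 then 4 * (ps (ps k) - 1) + 1
      else if pf (ps k) = pe 0 6 \<or> pf (ps k) = pe 1 1 then 8 * (ps (ps k) - 1) + 3
      else 8 * (ps (ps k) - 1) + 7) else 0)"

definition hR :: "nat \<Rightarrow> nat" where
  "hR z = (if pf (pf z) = 0 then 2 else if pf (pf z) = 1 then 3
    else if pf (pf z) = 2 then (if tcond (ps (pf z)) then (if ps z = 1 then 0 else 1) else 0)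
    else if pf (pf z) = 3 then (if gprefR (pf (ps (pf z))) (pf (ps (ps (pf z)))) (ps (ps (ps (pf z)))) then 1 else 0)
    else if pf (pf z) = 4 then
      (if pf (ps (pf z)) = pe 0 4 \<or> pf (ps (pf z)) = pe 1 3 \<or> pf (ps (pf z)) = pe 0 6 \<or> pf (ps (pf z)) = pe 1 1
          \<or> pf (ps (pf z)) = pe 0 0 \<or> pf (ps (pf z)) = pe 1 0 \<or> pf (ps (pf z)) = pe 0 7 \<or> pf (ps (pf z)) = pe 1 7
       then (if ps (ps (pf z)) = 0 then
               (if pf (ps (pf z)) = pe 1 3 \<or> pf (ps (pf z)) = pe 1 1 \<or> pf (ps (pf z)) = pe 0 7 \<or> pf (ps (pf z)) = pe 1 7 then 1 else 0)
             else ps z)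
       else 0)
    else 0)"

lemma tot_phiR: "tot phiR"
  unfolding phiR_def tcode_def by (intro tot_intros)+

lemma tot_hR: "tot hR"
  unfolding hR_def tcond_def gprefR_def by (intro tot_intros)+

definition PAIR :: "(baire \<Rightarrow> baire option) \<Rightarrow> (baire \<Rightarrow> baire option) \<Rightarrow> baire \<Rightarrow> baire option" where
  "PAIR F G p = Option.bind (F p) (\<lambda>a. Option.bind (G p) (\<lambda>b. Some (pairB a b)))"

lemma comp_PAIR: "computableB F \<Longrightarrow> computableB G \<Longrightarrow> computableB (PAIR F G)"
  unfolding PAIR_def[abs_def] by (rule comp_pair)

lemma PAIR_Some: "F p = Some a \<Longrightarrow> G p = Some b \<Longrightarrow> PAIR F G p = Some (pairB a b)"
  by (simp add: PAIR_def)

lemma comp_comp': "computableB F \<Longrightarrow> computableB G \<Longrightarrow> computableB (\<lambda>p. Option.bind (F p) G)"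
  by (rule comp_comp)

lemma par_some: "(\<And>i. F (compB i p) = Some (Q i)) \<Longrightarrow> par F p = Some (\<lambda>k. Q (pf k) (ps k))"
  by (simp add: par_def)

lemma compB_pack[simp]: "compB i (\<lambda>k. Q (pf k) (ps k)) = Q i" by (simp add: compB_def)

lemma z_odd4: "pairB p (pairB a b) (4 * m + 1) = a m"
proof -
  have "\<not> even (4 * m + 1)" by simp
  moreover have "(4 * m + 1) div 2 = 2 * m" by simp
  ultimately show ?thesis by (simp add: pairB_def)
qed

lemma z_odd8_3: "pairB p (pairB a (pairB c e)) (8 * m + 3) = c m"
proof -
  have "\<not> even (8 * m + 3)" "(8 * m + 3) div 2 = 2 * (2 * m + 1) - 1 + 0" by simp_all
  moreover have "(8 * m + 3) div 2 = 4 * m + 1" by simp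
  moreover have "\<not> even (4 * m + 1)" "(4 * m + 1) div 2 = 2 * m" by simp_all
  ultimately show ?thesis by (simp add: pairB_def)
qed

lemma z_odd8_7: "pairB p (pairB a (pairB c e)) (8 * m + 7) = e m"
proof -
  have "\<not> even (8 * m + 7)" "(8 * m + 7) div 2 = 4 * m + 3" by simp_all
  moreover have "\<not> even (4 * m + 3)" "(4 * m + 3) div 2 = 2 * m + 1" by simp_all
  moreover have "\<not> even (2 * m + 1)" "(2 * m + 1) div 2 = m" by simp_all
  ultimately show ?thesis by (simp add: pairB_def)
qed

lemma z_even: "pairB p R (2 * t) = p t" by (simp add: pairB_def)
lemma z_odd: "pairB p R (2 * t + 1) = R t" by (simp add: pairB_def)

lemma gturn_alt: "gturn xs w = (if tcond (wcode w) then (if fst (xs (lz (wcode w))) (drop (Suc (Suc (lz (wcode w)))) w) then 0 else 1) else 0)"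
  by (simp add: gturn_def tcond_def lz_wcode Let_def)

definition phM :: "nat \<Rightarrow> nat" where "phM k = pe (pf k) (pe 1 (ps k div 2))"
definition hM :: "nat \<Rightarrow> nat" where "hM z = (if even (ps (pf z)) then wcode [True] else ps z)"
definition phK :: "nat \<Rightarrow> nat" where "phK k = 2 * wcode (replicate (pf k) False @ [True]) + 1"
definition hK :: "nat \<Rightarrow> nat" where "hK z = (if ps z = 1 then 1 else 2)"

lemma tot_phM: "tot phM" unfolding phM_def by (intro tot_intros)+
lemma tot_hM: "tot hM" unfolding hM_def by (intro tot_intros)+
lemma tot_phK: "tot phK" unfolding phK_def by (intro tot_intros)+
lemma tot_hK: "tot hK" unfolding hK_def by (intro tot_intros)+

definition M1D :: "baire \<Rightarrow> baire option" where "M1D = (\<lambda>p. Some (\<lambda>k. hM (pe k (p (phM k)))))"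
definition NunivD :: "(baire \<Rightarrow> baire option) \<Rightarrow> baire \<Rightarrow> baire option" where
  "NunivD Fcl = (\<lambda>y. Option.bind ((\<lambda>y. Some (\<lambda>_. 0)) y) Fcl)"
definition NemptyD :: "(baire \<Rightarrow> baire option) \<Rightarrow> baire \<Rightarrow> baire option" where
  "NemptyD Fcl = (\<lambda>y. Option.bind ((\<lambda>y. Some (\<lambda>_. 1)) y) Fcl)"
definition C0D where "C0D Fpre Fcl = (\<lambda>y. Option.bind (PAIR (\<lambda>y. Some (\<lambda>_. wcode [False])) (NunivD Fcl) y) Fpre)"
definition LamD where "LamD Fpre Fcl Fun = (\<lambda>y. Option.bind (PAIR Fpre (C0D Fpre Fcl) y) Fun)"
definition NwinD where "NwinD Fpre Fom = (\<lambda>p. Option.bind (Option.bind (M1D p) (par Fpre)) Fom)"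
definition NmwD where "NmwD Fpre Fcl Fun Fom = (\<lambda>p. Option.bind (Option.bind (M1D p) (par (LamD Fpre Fcl Fun))) Fom)"
definition ZD where "ZD Fpre Fcl Fun Fom = PAIR (\<lambda>p. Some p) (PAIR (NwinD Fpre Fom) (PAIR (NmwD Fpre Fcl Fun Fom) (NemptyD Fcl)))"
definition HD where "HD Fpre Fcl Fun Fom = (\<lambda>p. Option.bind (ZD Fpre Fcl Fun Fom p) (\<lambda>z. Some (\<lambda>k. hR (pe k (z (phiR k))))))"

lemma H_correct:
  fixes \<Gamma>1 :: pointclass
  assumes Fpre: "\<And>w p A. \<Gamma>1 p = Some A \<Longrightarrow> \<exists>q. Fpre (pairB (const_name (wcode w)) p) = Some q \<and> \<Gamma>1 q = Some (prepend w ` A)"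
    and Fcl: "\<And>p A. closed_rep p A \<Longrightarrow> \<exists>q. Fcl p = Some q \<and> \<Gamma>1 q = Some A"
    and Fun: "\<And>p q A B. \<Gamma>1 p = Some A \<Longrightarrow> \<Gamma>1 q = Some B \<Longrightarrow> \<exists>r. Fun (pairB p q) = Some r \<and> \<Gamma>1 r = Some (A \<union> B)"
    and Fom: "\<And>p As. (\<forall>n. \<Gamma>1 (compB n p) = Some (As n)) \<Longrightarrow> \<exists>r. Fom p = Some r \<and> \<Gamma>1 r = Some (omega_op As)"
    and rep: "rep_seq (winlose_rep \<Gamma>1) p xs"
  shows "\<exists>r. HD Fpre Fcl Fun Fom p = Some r \<and> game_rep (compl_closure \<Gamma>1) r (theGame xs)"
proof -
  define W where "W n = snd (xs n)" for n
  have wl: "\<And>i w. compB 0 (compB i p) (wcode w) \<in> {1, 2} \<and> (fst (xs i) w \<longleftrightarrow> compB 0 (compB i p) (wcode w) = 1)"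
    and wlW: "\<And>i. \<Gamma>1 (compB 1 (compB i p)) = Some (W i)"
    using rep unfolding rep_seq_def winlose_rep_def W_def by blast+
  define m1 where "m1 = (\<lambda>k. hM (pe k (p (phM k))))"
  have M1: "M1D p = Some m1" by (simp add: M1D_def m1_def)
  have cm1: "compB n m1 = pairB (const_name (wcode [True])) (compB 1 (compB n p))" for n
    by (rule ext) (simp add: m1_def compB_def pairB_def const_name_def hM_def phM_def)
  have "\<forall>n. \<exists>q. Fpre (compB n m1) = Some q \<and> \<Gamma>1 q = Some (prepend [True] ` W n)"
    using Fpre[OF wlW] cm1 by simp
  then obtain A where A: "\<And>n. Fpre (compB n m1) = Some (A n)" "\<And>n. \<Gamma>1 (A n) = Some (prepend [True] ` W n)"
    by metis
  have pw: "par Fpre m1 = Some (\<lambda>k. A (pf k) (ps k))" by (rule par_some) (rule A(1))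
  obtain nw where nw: "Fom (\<lambda>k. A (pf k) (ps k)) = Some nw" "\<Gamma>1 nw = Some (omega_op (\<lambda>n. prepend [True] ` W n))"
    using Fom[of "\<lambda>k. A (pf k) (ps k)" "\<lambda>n. prepend [True] ` W n"] A(2) by auto
  have Nw: "NwinD Fpre Fom p = Some nw" using M1 pw nw by (simp add: NwinD_def)
  obtain un where un: "Fcl (\<lambda>_. 0) = Some un" "\<Gamma>1 un = Some UNIV"
    using Fcl[of "\<lambda>_. 0" UNIV] by (auto simp: closed_rep_def)
  obtain ne where ne: "Fcl (\<lambda>_. 1) = Some ne" "\<Gamma>1 ne = Some {}"
    using Fcl[of "\<lambda>_. 1" "{}"] by (auto simp: closed_rep_def)
  have Nu: "NunivD Fcl y = Some un" for y using un by (simp add: NunivD_def)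
  have Ne: "NemptyD Fcl y = Some ne" for y using ne by (simp add: NemptyD_def)
  obtain b0 where b0: "Fpre (pairB (\<lambda>_. wcode [False]) un) = Some b0" "\<Gamma>1 b0 = Some (prepend [False] ` UNIV)"
    using Fpre[OF un(2), of "[False]"] by (auto simp: const_name_def)
  have C0: "C0D Fpre Fcl y = Some b0" for y
    using PAIR_Some[of "\<lambda>y. Some (\<lambda>_. wcode [False])" y _ "NunivD Fcl" un, OF _ Nu] b0 by (simp add: C0D_def)
  have "\<forall>n. \<exists>r. LamD Fpre Fcl Fun (compB n m1) = Some r \<and> \<Gamma>1 r = Some (prepend [True] ` W n \<union> prepend [False] ` UNIV)"
  proof
    fix n
    obtain r where r: "Fun (pairB (A n) b0) = Some r" "\<Gamma>1 r = Some (prepend [True] ` W n \<union> prepend [False] ` UNIV)"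
      using Fun[OF A(2)[of n] b0(2)] by blast
    have "PAIR Fpre (C0D Fpre Fcl) (compB n m1) = Some (pairB (A n) b0)" by (rule PAIR_Some[where F=Fpre and G="C0D Fpre Fcl", OF A(1)[of n] C0[of "compB n m1"]])
    thus "\<exists>r. LamD Fpre Fcl Fun (compB n m1) = Some r \<and> \<Gamma>1 r = Some (prepend [True] ` W n \<union> prepend [False] ` UNIV)"
      using r by (simp add: LamD_def)
  qed
  then obtain B where B: "\<And>n. LamD Fpre Fcl Fun (compB n m1) = Some (B n)" "\<And>n. \<Gamma>1 (B n) = Some (prepend [True] ` W n \<union> prepend [False] ` UNIV)"
    by metis
  have pm: "par (LamD Fpre Fcl Fun) m1 = Some (\<lambda>k. B (pf k) (ps k))" by (rule par_some) (rule B(1))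
  obtain nm where nm: "Fom (\<lambda>k. B (pf k) (ps k)) = Some nm" "\<Gamma>1 nm = Some (omega_op (\<lambda>n. prepend [True] ` W n \<union> prepend [False] ` UNIV))"
    using Fom[of "\<lambda>k. B (pf k) (ps k)" "\<lambda>n. prepend [True] ` W n \<union> prepend [False] ` UNIV"] B(2) by auto
  have Nm: "NmwD Fpre Fcl Fun Fom p = Some nm" using M1 pm nm by (simp add: NmwD_def)
  define z where "z = pairB p (pairB nw (pairB nm ne))"
  have Zp: "ZD Fpre Fcl Fun Fom p = Some z" unfolding ZD_def z_def
    by (intro PAIR_Some Nw Nm Ne) simp
  define r where "r = (\<lambda>k. hR (pe k (z (phiR k))))"
  have Hp: "HD Fpre Fcl Fun Fom p = Some r" by (simp add: HD_def Zp r_def)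
  have E2': "gvalue xs -` {2} = omega_op (\<lambda>n. prepend [True] ` W n)"
    using E2[of xs] by (auto simp: W_def)
  have E12': "gvalue xs -` {1,2} = omega_op (\<lambda>n. prepend [True] ` W n \<union> prepend [False] ` UNIV)"
    using E12[of xs] by (auto simp: W_def)
  have lt3: "gvalue xs x < 3" for x by (rule gvalue_lt3)
  have v3: "gvalue xs x = 0 \<or> gvalue xs x = 1 \<or> gvalue xs x = 2" for x using lt3[of x] by arith
  have E0: "gvalue xs -` {0} = - (gvalue xs -` {1,2})" using v3 by fastforce
  have E01: "gvalue xs -` {0,1} = - (gvalue xs -` {2})" using v3 by fastforce
  have E012: "gvalue xs -` {0,1,2} = - {}" using v3 by fastforce
  have Eemp: "gvalue xs -` {} = {}" by simp
  define e where "e j = compB j (compB 4 r)" for j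
  have e0: "e j 0 = hR (pe (pe 4 (pe j 0)) (z (phiR (pe 4 (pe j 0)))))" for j
    by (simp add: e_def compB_def r_def)
  have eS: "e j (Suc m) = hR (pe (pe 4 (pe j (Suc m))) (z (phiR (pe 4 (pe j (Suc m))))))" for j m
    by (simp add: e_def compB_def r_def)
  have nmw1: "(\<lambda>m. e j (Suc m)) = nw" if "j = pe 0 4 \<or> j = pe 1 3" for j
    using that by (auto intro!: ext simp: eS phiR_def hR_def z_def z_odd4[simplified])
  have nmm1: "(\<lambda>m. e j (Suc m)) = nm" if "j = pe 0 6 \<or> j = pe 1 1" for j
    using that by (auto intro!: ext simp: eS phiR_def hR_def z_def z_odd8_3[simplified])
  have nme1: "(\<lambda>m. e j (Suc m)) = ne" if "j = pe 0 0 \<or> j = pe 1 0 \<or> j = pe 0 7 \<or> j = pe 1 7" for j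
    using that by (auto intro!: ext simp: eS phiR_def hR_def z_def z_odd8_7[simplified])
  have names: "compl_closure \<Gamma>1 (compB (pe a (set_encode U)) (compB 4 r)) = Some (gvalue xs -` U)"
    if a: "a < 2" and U: "upper_set (theGame xs) a U" for a U
  proof -
    have cc: "compl_closure \<Gamma>1 (e j) = (case \<Gamma>1 (\<lambda>m. e j (Suc m)) of None \<Rightarrow> None | Some A \<Rightarrow> Some (if e j 0 = 0 then A else - A))" for j
      by (simp add: compl_closure_def)
    from upper_cases[OF a U] show ?thesis
    proof (elim disjE conjE)
      assume "a = 0" "U = {}"
      thus ?thesis using cc[of "pe 0 0"] nme1[of "pe 0 0"] ne e0[of "pe 0 0"] by (simp add: e_def hR_def)
    next
      assume "a = 0" "U = {2}"
      thus ?thesis using cc[of "pe 0 4"] nmw1[of "pe 0 4"] nw E2' e0[of "pe 0 4"] by (simp add: e_def hR_def)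
    next
      assume "a = 0" "U = {1,2}"
      thus ?thesis using cc[of "pe 0 6"] nmm1[of "pe 0 6"] nm E12' e0[of "pe 0 6"] by (simp add: e_def hR_def)
    next
      assume "a = 0" "U = {0,1,2}"
      thus ?thesis using cc[of "pe 0 7"] nme1[of "pe 0 7"] ne E012 e0[of "pe 0 7"] by (simp add: e_def hR_def)
    next
      assume "a = 1" "U = {}"
      thus ?thesis using cc[of "pe 1 0"] nme1[of "pe 1 0"] ne e0[of "pe 1 0"] by (simp add: e_def hR_def)
    next
      assume "a = 1" "U = {0}"
      thus ?thesis using cc[of "pe 1 1"] nmm1[of "pe 1 1"] nm E12' E0 e0[of "pe 1 1"] by (simp add: e_def hR_def)
    next
      assume "a = 1" "U = {0,1}"
      thus ?thesis using cc[of "pe 1 3"] nmw1[of "pe 1 3"] nw E2' E01 e0[of "pe 1 3"] by (simp add: e_def hR_def numeral_3_eq_3)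
    next
      assume "a = 1" "U = {0,1,2}"
      thus ?thesis using cc[of "pe 1 7"] nme1[of "pe 1 7"] ne E012 e0[of "pe 1 7"] by (simp add: e_def hR_def)
    qed
  qed
  have turn: "gturn xs w = compB 2 r (wcode w)" for w
  proof -
    let ?c = "wcode w"
    let ?n = "lz ?c"
    have v: "compB 2 r ?c = (if tcond ?c then (if p (tcode ?c) = 1 then 0 else 1) else 0)"
      by (simp add: compB_def r_def phiR_def hR_def z_def z_even)
    have "p (tcode ?c) = compB 0 (compB ?n p) (wcode (drop (Suc (Suc ?n)) w))"
      by (simp add: tcode_def compB_def)
    thus ?thesis using v wl[of ?n "drop (Suc (Suc ?n)) w"] gturn_alt[of xs w] by auto
  qed
  have prefs: "gprefR a x y \<longleftrightarrow> (a < 2 \<and> x < 3 \<and> y < 3 \<and> compB 3 r (pe a (pe x y)) \<noteq> 0)" for a x y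
    by (auto simp: compB_def r_def hR_def gprefR_def)
  have "game_rep (compl_closure \<Gamma>1) r (theGame xs)"
    unfolding game_rep_def
    using wf_theGame[of xs] turn prefs names
    by (simp add: theGame_def compB_def r_def hR_def)
  with Hp show ?thesis by blast
qed

lemma comp_HD:
  assumes "computableB Fpre" "computableB Fcl" "computableB Fun" "computableB Fom"
  shows "computableB (HD Fpre Fcl Fun Fom)"
proof -
  have M1: "computableB M1D" unfolding M1D_def by (rule comp_map[OF tot_phM tot_hM])
  have Nu: "computableB (NunivD Fcl)" unfolding NunivD_def by (rule comp_comp[OF comp_const assms(2)])
  have Ne: "computableB (NemptyD Fcl)" unfolding NemptyD_def by (rule comp_comp[OF comp_const assms(2)])
  have C0: "computableB (C0D Fpre Fcl)" unfolding C0D_def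
    by (rule comp_comp[OF comp_PAIR[OF comp_const Nu] assms(1)])
  have L: "computableB (LamD Fpre Fcl Fun)" unfolding LamD_def
    by (rule comp_comp[OF comp_PAIR[OF assms(1) C0] assms(3)])
  have Nw: "computableB (NwinD Fpre Fom)" unfolding NwinD_def
    by (rule comp_comp[OF comp_comp[OF M1 comp_par[OF assms(1)]] assms(4)])
  have Nm: "computableB (NmwD Fpre Fcl Fun Fom)" unfolding NmwD_def
    by (rule comp_comp[OF comp_comp[OF M1 comp_par[OF L]] assms(4)])
  have Z: "computableB (ZD Fpre Fcl Fun Fom)" unfolding ZD_def
    by (intro comp_PAIR comp_id Nw Nm Ne)
  show ?thesis unfolding HD_def
    by (rule comp_comp[OF Z comp_map[OF tot_phiR tot_hR]])
qed

definition KD :: "baire \<Rightarrow> baire option" where "KD = (\<lambda>z. Some (\<lambda>k. hK (pe k (z (phK k)))))"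

lemma KD_val: "KD (pairB p q) = Some (\<lambda>k. if q (wcode (replicate (pf k) False @ [True])) = 1 then 1 else 2)"
proof -
  have "pairB p q (phK k) = q (wcode (replicate (pf k) False @ [True]))" for k
    unfolding phK_def by (rule z_odd)
  thus ?thesis by (simp add: KD_def hK_def)
qed

theorem lemma28:
  fixes \<Gamma>1 :: pointclass
  assumes "standing_assumptions \<Gamma>1"
    and "contains_closed_unif \<Gamma>1"
    and "closed_fin_union_unif \<Gamma>1"
    and "closed_omega_op_unif \<Gamma>1"
    and "standing_assumptions (compl_closure \<Gamma>1)"
  shows "weihrauch_leq (hat Win) (rep_seq (winlose_rep \<Gamma>1)) (rep_seq rep_nat)
                       SPE (game_rep (compl_closure \<Gamma>1)) profile_rep"
proof -
  have sa: "(\<forall>d W. W \<in> ran \<Gamma>1 \<longrightarrow> determined d W)"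
    using assms(1) unfolding standing_assumptions_def by blast
  obtain Fpre where Fpre1: "computableB Fpre"
    and Fpre: "\<And>w p A. \<Gamma>1 p = Some A \<Longrightarrow> \<exists>q. Fpre (pairB (const_name (wcode w)) p) = Some q \<and> \<Gamma>1 q = Some (prepend w ` A)"
    using assms(1) unfolding standing_assumptions_def by blast
  obtain Finv where Finv: "\<And>w p A. \<Gamma>1 p = Some A \<Longrightarrow> \<exists>q. Finv (pairB (const_name (wcode w)) p) = Some q \<and> \<Gamma>1 q = Some {x. prepend w x \<in> A}"
    using assms(1) unfolding standing_assumptions_def by blast
  obtain Fcl where Fcl1: "computableB Fcl" and Fcl: "\<And>p A. closed_rep p A \<Longrightarrow> \<exists>q. Fcl p = Some q \<and> \<Gamma>1 q = Some A"
    using assms(2) unfolding contains_closed_unif_def by blast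
  obtain Fun where Fun1: "computableB Fun"
    and Fun: "\<And>p q A B. \<Gamma>1 p = Some A \<Longrightarrow> \<Gamma>1 q = Some B \<Longrightarrow> \<exists>r. Fun (pairB p q) = Some r \<and> \<Gamma>1 r = Some (A \<union> B)"
    using assms(3) unfolding closed_fin_union_unif_def by blast
  obtain Fom where Fom1: "computableB Fom"
    and Fom: "\<And>p As. (\<forall>n. \<Gamma>1 (compB n p) = Some (As n)) \<Longrightarrow> \<exists>r. Fom p = Some r \<and> \<Gamma>1 r = Some (omega_op As)"
    using assms(4) unfolding closed_omega_op_unif_def by blast
  let ?H = "HD Fpre Fcl Fun Fom"
  have KD: "computableB KD" unfolding KD_def by (rule comp_map[OF tot_phK tot_hK])
  show ?thesis unfolding weihrauch_leq_def
  proof (intro exI conjI allI impI)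
    show "computableB KD" by (rule KD)
    show "computableB ?H" by (rule comp_HD[OF Fpre1 Fcl1 Fun1 Fom1])
    fix G assume G: "realizes SPE (game_rep (compl_closure \<Gamma>1)) profile_rep G"
    show "realizes (hat Win) (rep_seq (winlose_rep \<Gamma>1)) (rep_seq rep_nat)
            (\<lambda>p. Option.bind (?H p) (\<lambda>h. Option.bind (G h) (\<lambda>r. KD (pairB p r))))"
      unfolding realizes_def
    proof (intro allI impI)
      fix p xs assume rep: "rep_seq (winlose_rep \<Gamma>1) p xs" and "hat Win xs \<noteq> {}"
      have "\<exists>r. ?H p = Some r \<and> game_rep (compl_closure \<Gamma>1) r (theGame xs)"
        apply (rule H_correct)
            apply (erule Fpre)
           apply (erule Fcl)
          apply (erule Fun, assumption)
         apply (erule Fom)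
        apply (rule rep)
        done
      then obtain r where Hr: "?H p = Some r" and gr: "game_rep (compl_closure \<Gamma>1) r (theGame xs)"
        by blast
      have inran: "\<And>i. snd (xs i) \<in> ran \<Gamma>1"
        using rep unfolding rep_seq_def winlose_rep_def ran_def by blast
      have det0: "\<And>i. determined (fst (xs i)) (snd (xs i))" using sa inran by blast
      have detv: "\<And>i v. determined (dv (fst (xs i)) v) (Wv (snd (xs i)) v)"
      proof -
        fix i v
        obtain pi where "\<Gamma>1 pi = Some (snd (xs i))" using inran[of i] unfolding ran_def by blast
        then obtain q where "\<Gamma>1 q = Some {x. prepend v x \<in> snd (xs i)}" using Finv by blast
        hence "Wv (snd (xs i)) v \<in> ran \<Gamma>1" unfolding Wv_def ran_def by blast
        thus "determined (dv (fst (xs i)) v) (Wv (snd (xs i)) v)" using sa by blast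
      qed
      obtain s0 where "subgame_perfect (theGame xs) s0" using spe_exists[of xs, OF detv] by blast
      hence "SPE (theGame xs) \<noteq> {}" using antag_theGame[of xs] by (auto simp: SPE_def)
      then obtain q' s where Gr: "G r = Some q'" and pq: "profile_rep q' s" and sS: "s \<in> SPE (theGame xs)"
        using G gr unfolding realizes_def by blast
      have spe: "subgame_perfect (theGame xs) s" using sS antag_theGame[of xs] by (simp add: SPE_def)
      define ys :: "nat \<Rightarrow> nat" where "ys i = (if s (hI i) then 1 else 2)" for i
      define q where "q = (\<lambda>k. if q' (wcode (hI (pf k))) = 1 then 1 else (2::nat))"
      have out: "Option.bind (?H p) (\<lambda>h. Option.bind (G h) (\<lambda>r. KD (pairB p r))) = Some q"
        using Hr Gr KD_val[of p q'] by (simp add: q_def)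
      have "rep_seq rep_nat q ys"
        unfolding rep_seq_def rep_nat_def
        using pq by (simp add: compB_def q_def ys_def profile_rep_def)
      moreover have "ys \<in> hat Win xs"
        unfolding hat_def Win_def
        using spe_winner[OF spe det0] by (simp add: ys_def)
      ultimately show "\<exists>q y. Option.bind (?H p) (\<lambda>h. Option.bind (G h) (\<lambda>r. KD (pairB p r))) = Some q \<and>
             rep_seq rep_nat q y \<and> y \<in> hat Win xs"
        using out by blast
    qed
  qed
qed


end
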